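(* Consider the two-layer evolutionary process described in the context, with death-Birth updating in both layers, and let $\boldsymbol{\xi}=(\xi^{[1]},\xi^{[2]})\in\{0,1\}^N\times\{0,1\}^N$ be any initial state that is not one of the four states in which both layers are monomorphic. Let $\rho^{[1]}(\boldsymbol{\xi})$ be the probability that, starting from $\boldsymbol{\xi}$, layer 1 eventually consists only of cooperators. Then, under weak selection, cooperation is favored, i.e. $$\left.\frac{\mathrm{d}}{\mathrm{d}\delta}\rho^{[1]}(\boldsymbol{\xi})\right|_{\delta=0}>0,$$ if and only if $$c\,\theta_2+b\,(\theta_1-\theta_3)-(r-1)\,\phi_{2,0}>0 .$$
   Context: There are $N\ge 2$ individuals $1,\dots,N$. For each layer $L\in\{1,2\}$ there is a connected undirected weighted graph on $\{1,\dots,N\}$ with symmetric nonnegative weights $w^{[L]}_{ij}$; let $s^{[L]}_i=\sum_j w^{[L]}_{ij}>0$, $p^{[L]}_{ij}=w^{[L]}_{ij}/s^{[L]}_i$, let $P^{[L]}=(p^{[L]}_{ij})$, and let $\pi^{[L]}_i=s^{[L]}_i/\sum_k s^{[L]}_k$. A state is $\mathbf{x}=(x^{[1]},x^{[2]})\in\{0,1\}^N\times\{0,1\}^N$; $x^{[1]}_i=1$ ($0$) means individual $i$ is a cooperator (defector) in layer 1, and $x^{[2]}_i=1$ ($0$) means $i$ is a mutant (resident) in layer 2. With parameters $b,c$ and $r\ge 0$, the payoff of $i$ is $u_i=u^{[1]}_i+u^{[2]}_i$, where $u^{[1]}_i=-c\,x^{[1]}_i+\sum_j b\,p^{[1]}_{ij}x^{[1]}_j$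 (donation game) and $u^{[2]}_i=(r-1)x^{[2]}_i+1$ (constant selection). The fecundity is $F_i=1+\delta u_i$, with selection strength $\delta\ge0$. In each time step, simultaneously and independently in each layer $L$: an individual $i$ is chosen uniformly at random, then $j$ is chosen with probability $w^{[L]}_{ij}F_j/\sum_k w^{[L]}_{ik}F_k$, and $x^{[L]}_i$ is replaced by $x^{[L]}_j$ (death-Birth rule in both layers). Let $\hat\xi^{[L]}=\sum_i\pi^{[L]}_i\xi^{[L]}_i$. Let $(\beta_{ij})$ be the unique solution of: $\beta_{ii}=N(\xi^{[1]}_i-\hat\xi^{[1]})+\sum_k p^{[1]}_{ik}\beta_{kk}$ for all $i$; $\beta_{ij}=\tfrac N2(\xi^{[1]}_i\xi^{[1]}_j-\hat\xi^{[1]})+\tfrac12\sum_k p^{[1]}_{ik}\beta_{kj}+\tfrac12\sum_k p^{[1]}_{jk}\beta_{ik}$ for $i\ne j$; and $\sum_i\pi^{[1]}_i\beta_{ii}=0$. Let $(\gamma_{ij})$ be the unique solution of: for all $i,j$, $\gamma_{ij}=\frac{N^2}{2N-1}(\xi^{[1]}_i\xi^{[2]}_j-\hat\xi^{[1]}\hat\xi^{[2]})+\frac{1}{2N-1}\sum_{k_1,k_2}p^{[1]}_{ik_1}p^{[2]}_{jk_2}\gamma_{k_1k_2}+\frac{N-1}{2N-1}\Big(\sum_{k}p^{[1]}_{ik}\gamma_{kj}+\sum_k p^{[2]}_{jk}\gamma_{ik}\Big)$, together with $\sum_i\pi^{[1]}_i\gamma_{ii}=0$. Define $\theta_n=\sum_{i,j}\pi^{[1]}_i\big((P^{[1]})^n\big)_{ij}\beta_{ij}$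 and $\phi_{n,m}=\sum_{i,j}\pi^{[1]}_i\big((P^{[1]})^n(P^{[2]})^m\big)_{ij}\gamma_{ij}$. *)

theory Defs
  imports Complex_Main
begin

text \<open>Individuals are 0..N-1. A weighted graph on them is a function w :: nat => nat => real
  (only the values on indices below N matter). A state is a pair (S1, S2) of subsets of {..<N}:
  i in S1 iff x1_i = 1 (cooperator), i in S2 iff x2_i = 1 (mutant).\<close>

definition strength :: "nat \<Rightarrow> (nat \<Rightarrow> nat \<Rightarrow> real) \<Rightarrow> nat \<Rightarrow> real" where
  "strength N w i = (\<Sum>k<N. w i k)"

definition pmat :: "nat \<Rightarrow> (nat \<Rightarrow> nat \<Rightarrow> real) \<Rightarrow> nat \<Rightarrow> nat \<Rightarrow> real" where
  "pmat N w i j = w i j / strength N w i"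

definition statdist :: "nat \<Rightarrow> (nat \<Rightarrow> nat \<Rightarrow> real) \<Rightarrow> nat \<Rightarrow> real" where
  "statdist N w i = strength N w i / (\<Sum>k<N. strength N w k)"

definition ind :: "nat set \<Rightarrow> nat \<Rightarrow> real" where
  "ind S i = (if i \<in> S then 1 else 0)"

definition meanstate :: "nat \<Rightarrow> (nat \<Rightarrow> nat \<Rightarrow> real) \<Rightarrow> nat set \<Rightarrow> real" where
  "meanstate N w S = (\<Sum>i<N. statdist N w i * ind S i)"

definition valid_layer :: "nat \<Rightarrow> (nat \<Rightarrow> nat \<Rightarrow> real) \<Rightarrow> bool" where
  "valid_layer N w \<longleftrightarrow>
     (\<forall>i<N. \<forall>j<N. w i j = w j i \<and> 0 \<le> w i j) \<and>
     (\<forall>i<N. strength N w i > 0) \<and>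
     (\<forall>i<N. \<forall>j<N. (\<lambda>a b. a < N \<and> b < N \<and> w a b > 0)\<^sup>*\<^sup>* i j)"

definition states :: "nat \<Rightarrow> (nat set \<times> nat set) set" where
  "states N = Pow {..<N} \<times> Pow {..<N}"

text \<open>Payoff u_i = u1_i + u2_i (donation game in layer 1, constant selection in layer 2).\<close>
definition payoff :: "nat \<Rightarrow> (nat \<Rightarrow> nat \<Rightarrow> real) \<Rightarrow> real \<Rightarrow> real \<Rightarrow> real
    \<Rightarrow> nat set \<times> nat set \<Rightarrow> nat \<Rightarrow> real" where
  "payoff N w1 b c r x i =
     (- c * ind (fst x) i + (\<Sum>j<N. b * pmat N w1 i j * ind (fst x) j))
     + ((r - 1) * ind (snd x) i + 1)"

definition fecundity :: "nat \<Rightarrow> (nat \<Rightarrow> nat \<Rightarrow> real) \<Rightarrow> real \<Rightarrow> real \<Rightarrow> real \<Rightarrow> real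
    \<Rightarrow> nat set \<times> nat set \<Rightarrow> nat \<Rightarrow> real" where
  "fecundity N w1 b c r \<delta> x i = 1 + \<delta> * payoff N w1 b c r x i"

definition replace :: "nat set \<Rightarrow> nat \<Rightarrow> nat \<Rightarrow> nat set" where
  "replace S i j = (if j \<in> S then insert i S else S - {i})"

definition layer_trans :: "nat \<Rightarrow> (nat \<Rightarrow> nat \<Rightarrow> real) \<Rightarrow> (nat \<Rightarrow> real)
    \<Rightarrow> nat set \<Rightarrow> nat set \<Rightarrow> real" where
  "layer_trans N w F X Y =
     (\<Sum>i<N. (1 / real N) * (\<Sum>j<N.
        (if Y = replace X i j then w i j * F j / (\<Sum>k<N. w i k * F k) else 0)))"

definition trans :: "nat \<Rightarrow> (nat \<Rightarrow> nat \<Rightarrow> real) \<Rightarrow> (nat \<Rightarrow> nat \<Rightarrow> real) \<Rightarrow> real \<Rightarrow> real \<Rightarrow> real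
    \<Rightarrow> real \<Rightarrow> nat set \<times> nat set \<Rightarrow> nat set \<times> nat set \<Rightarrow> real" where
  "trans N w1 w2 b c r \<delta> x y =
     layer_trans N w1 (fecundity N w1 b c r \<delta> x) (fst x) (fst y) *
     layer_trans N w2 (fecundity N w1 b c r \<delta> x) (snd x) (snd y)"

fun mc_nstep :: "('s \<Rightarrow> 's \<Rightarrow> real) \<Rightarrow> 's set \<Rightarrow> nat \<Rightarrow> 's \<Rightarrow> 's \<Rightarrow> real" where
  "mc_nstep P S 0 x y = (if x = y then 1 else 0)"
| "mc_nstep P S (Suc n) x y = (\<Sum>z\<in>S. P x z * mc_nstep P S n z y)"

text \<open>The target set
  (layer 1 all cooperators) is closed under the dynamics, so this is the limit of the
  probability of being in it at time n.\<close>
definition rho1 :: "nat \<Rightarrow> (nat \<Rightarrow> nat \<Rightarrow> real) \<Rightarrow> (nat \<Rightarrow> nat \<Rightarrow> real) \<Rightarrow> real \<Rightarrow> real \<Rightarrow> real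
    \<Rightarrow> real \<Rightarrow> nat set \<times> nat set \<Rightarrow> real" where
  "rho1 N w1 w2 b c r \<delta> \<xi> =
     lim (\<lambda>n. \<Sum>y\<in>{y \<in> states N. fst y = {..<N}}.
            mc_nstep (trans N w1 w2 b c r \<delta>) (states N) n \<xi> y)"

fun matpow :: "nat \<Rightarrow> (nat \<Rightarrow> nat \<Rightarrow> real) \<Rightarrow> nat \<Rightarrow> nat \<Rightarrow> nat \<Rightarrow> real" where
  "matpow N p 0 i j = (if i = j then 1 else 0)"
| "matpow N p (Suc n) i j = (\<Sum>k<N. p i k * matpow N p n k j)"

definition is_beta :: "nat \<Rightarrow> (nat \<Rightarrow> nat \<Rightarrow> real) \<Rightarrow> nat set \<Rightarrow> (nat \<Rightarrow> nat \<Rightarrow> real) \<Rightarrow> bool" where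
  "is_beta N w1 X \<beta> \<longleftrightarrow>
     (\<forall>i j. \<not> (i < N \<and> j < N) \<longrightarrow> \<beta> i j = 0) \<and>
     (\<forall>i<N. \<beta> i i = real N * (ind X i - meanstate N w1 X)
                    + (\<Sum>k<N. pmat N w1 i k * \<beta> k k)) \<and>
     (\<forall>i<N. \<forall>j<N. i \<noteq> j \<longrightarrow>
        \<beta> i j = real N / 2 * (ind X i * ind X j - meanstate N w1 X)
                 + 1/2 * (\<Sum>k<N. pmat N w1 i k * \<beta> k j)
                 + 1/2 * (\<Sum>k<N. pmat N w1 j k * \<beta> i k)) \<and>
     (\<Sum>i<N. statdist N w1 i * \<beta> i i) = 0"

definition betaM :: "nat \<Rightarrow> (nat \<Rightarrow> nat \<Rightarrow> real) \<Rightarrow> nat set \<Rightarrow> nat \<Rightarrow> nat \<Rightarrow> real" where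
  "betaM N w1 X = (THE \<beta>. is_beta N w1 X \<beta>)"

definition is_gamma :: "nat \<Rightarrow> (nat \<Rightarrow> nat \<Rightarrow> real) \<Rightarrow> (nat \<Rightarrow> nat \<Rightarrow> real)
    \<Rightarrow> nat set \<Rightarrow> nat set \<Rightarrow> (nat \<Rightarrow> nat \<Rightarrow> real) \<Rightarrow> bool" where
  "is_gamma N w1 w2 X1 X2 \<gamma> \<longleftrightarrow>
     (\<forall>i j. \<not> (i < N \<and> j < N) \<longrightarrow> \<gamma> i j = 0) \<and>
     (\<forall>i<N. \<forall>j<N.
        \<gamma> i j = (real N)^2 / (2 * real N - 1)
                   * (ind X1 i * ind X2 j - meanstate N w1 X1 * meanstate N w2 X2)
                 + 1 / (2 * real N - 1)
                   * (\<Sum>k1<N. \<Sum>k2<N. pmat N w1 i k1 * pmat N w2 j k2 * \<gamma> k1 k2)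
                 + (real N - 1) / (2 * real N - 1)
                   * ((\<Sum>k<N. pmat N w1 i k * \<gamma> k j) + (\<Sum>k<N. pmat N w2 j k * \<gamma> i k))) \<and>
     (\<Sum>i<N. statdist N w1 i * \<gamma> i i) = 0"

definition gammaM :: "nat \<Rightarrow> (nat \<Rightarrow> nat \<Rightarrow> real) \<Rightarrow> (nat \<Rightarrow> nat \<Rightarrow> real)
    \<Rightarrow> nat set \<Rightarrow> nat set \<Rightarrow> nat \<Rightarrow> nat \<Rightarrow> real" where
  "gammaM N w1 w2 X1 X2 = (THE \<gamma>. is_gamma N w1 w2 X1 X2 \<gamma>)"

definition theta :: "nat \<Rightarrow> (nat \<Rightarrow> nat \<Rightarrow> real) \<Rightarrow> nat set \<Rightarrow> nat \<Rightarrow> real" where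
  "theta N w1 X n =
     (\<Sum>i<N. \<Sum>j<N. statdist N w1 i * matpow N (pmat N w1) n i j * betaM N w1 X i j)"

definition phi :: "nat \<Rightarrow> (nat \<Rightarrow> nat \<Rightarrow> real) \<Rightarrow> (nat \<Rightarrow> nat \<Rightarrow> real)
    \<Rightarrow> nat set \<Rightarrow> nat set \<Rightarrow> nat \<Rightarrow> nat \<Rightarrow> real" where
  "phi N w1 w2 X1 X2 n m =
     (\<Sum>i<N. \<Sum>j<N. statdist N w1 i
        * (\<Sum>k<N. matpow N (pmat N w1) n i k * matpow N (pmat N w2) m k j)
        * gammaM N w1 w2 X1 X2 i j)"

end

theory Submission
  imports Defs "HOL-Analysis.Analysis"
begin

definition EE :: "('s \<Rightarrow> 's \<Rightarrow> real) \<Rightarrow> 's set \<Rightarrow> nat \<Rightarrow> ('s \<Rightarrow> real) \<Rightarrow> 's \<Rightarrow> real" where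
  "EE P S t h x = (\<Sum>y\<in>S. mc_nstep P S t x y * h y)"

lemma EE_0: "finite S \<Longrightarrow> x \<in> S \<Longrightarrow> EE P S 0 h x = h x"
proof -
  assume "finite S" "x \<in> S"
  have "EE P S 0 h x = (\<Sum>y\<in>S. if x = y then h y else 0)"
    unfolding EE_def by (rule sum.cong) auto
  also have "\<dots> = h x" using \<open>finite S\<close> \<open>x \<in> S\<close> by simp
  finally show ?thesis .
qed

lemma EE_Suc: "finite S \<Longrightarrow> EE P S (Suc t) h x = (\<Sum>z\<in>S. P x z * EE P S t h z)"
  unfolding EE_def mc_nstep.simps
  by (simp only: sum_distrib_right sum_distrib_left mult.assoc) (rule sum.swap)

lemma EE_1: "finite S \<Longrightarrow> EE P S 1 h x = (\<Sum>z\<in>S. P x z * h z)"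
  using EE_Suc[of S P 0 h x] by (simp add: EE_0)

lemma EE_add: "finite S \<Longrightarrow> x \<in> S \<Longrightarrow> EE P S (a + b) h x = EE P S a (EE P S b h) x"
proof (induction a arbitrary: x)
  case 0 then show ?case by (simp add: EE_0)
next
  case (Suc a) then show ?case by (simp add: EE_Suc)
qed

lemma EE_Suc_last: "finite S \<Longrightarrow> x \<in> S \<Longrightarrow> EE P S (Suc t) h x = EE P S t (EE P S 1 h) x"
  using EE_add[of S x P t 1 h] by simp

lemma EE_lin: "EE P S t (\<lambda>y. a * h y + g y) x = a * EE P S t h x + EE P S t g x"
  unfolding EE_def by (simp add: algebra_simps sum.distrib sum_distrib_left)
lemma EE_diff: "EE P S t (\<lambda>y. h y - g y) x = EE P S t h x - EE P S t g x"
  unfolding EE_def by (simp add: algebra_simps sum_subtractf)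
lemma EE_add_fun: "EE P S t (\<lambda>y. h y + g y) x = EE P S t h x + EE P S t g x"
  unfolding EE_def by (simp add: algebra_simps sum.distrib)
lemma EE_cmult: "EE P S t (\<lambda>y. a * h y) x = a * EE P S t h x"
  unfolding EE_def by (simp add: algebra_simps sum_distrib_left)
lemma EE_sum: "EE P S t (\<lambda>y. \<Sum>k\<in>K. h k y) x = (\<Sum>k\<in>K. EE P S t (h k) x)"
  unfolding EE_def by (simp only: sum_distrib_left) (rule sum.swap)
lemma EE_cong: "(\<And>y. y \<in> S \<Longrightarrow> h y = g y) \<Longrightarrow> EE P S t h x = EE P S t g x"
  unfolding EE_def by simp

definition stoch :: "('s \<Rightarrow> 's \<Rightarrow> real) \<Rightarrow> 's set \<Rightarrow> bool" where
  "stoch P S \<longleftrightarrow> finite S \<and> (\<forall>x\<in>S. \<forall>y\<in>S. P x y \<ge> 0) \<and> (\<forall>x\<in>S. (\<Sum>y\<in>S. P x y) = 1)"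

lemma mc_nonneg: "stoch P S \<Longrightarrow> x \<in> S \<Longrightarrow> mc_nstep P S t x y \<ge> 0"
proof (induction t arbitrary: x)
  case 0 then show ?case by simp
next
  case (Suc t) then show ?case unfolding stoch_def by (auto intro!: sum_nonneg mult_nonneg_nonneg)
qed

lemma EE_mono: "stoch P S \<Longrightarrow> x \<in> S \<Longrightarrow> (\<And>y. y \<in> S \<Longrightarrow> h y \<le> g y) \<Longrightarrow> EE P S t h x \<le> EE P S t g x"
  unfolding EE_def by (intro sum_mono mult_left_mono) (auto intro: mc_nonneg)

lemma EE_nonneg: "stoch P S \<Longrightarrow> x \<in> S \<Longrightarrow> (\<And>y. y \<in> S \<Longrightarrow> 0 \<le> h y) \<Longrightarrow> 0 \<le> EE P S t h x"
  using EE_mono[of P S x "\<lambda>_. 0" h t] by (simp add: EE_def)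

lemma EE_const: "stoch P S \<Longrightarrow> x \<in> S \<Longrightarrow> EE P S t (\<lambda>_. a) x = a"
proof (induction t arbitrary: x)
  case 0 then show ?case by (simp add: EE_0 stoch_def)
next
  case (Suc t)
  have "EE P S (Suc t) (\<lambda>_. a) x = (\<Sum>z\<in>S. P x z * a)"
    using Suc by (simp add: EE_Suc stoch_def)
  also have "\<dots> = a" using Suc(2,3) by (simp add: stoch_def sum_distrib_right[symmetric])
  finally show ?case .
qed

lemma EE_abs: "stoch P S \<Longrightarrow> x \<in> S \<Longrightarrow> \<bar>EE P S t h x\<bar> \<le> EE P S t (\<lambda>y. \<bar>h y\<bar>) x"
proof -
  assume a: "stoch P S" "x \<in> S"
  have "\<bar>EE P S t h x\<bar> \<le> (\<Sum>y\<in>S. \<bar>mc_nstep P S t x y * h y\<bar>)"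
    unfolding EE_def by (rule sum_abs)
  also have "\<dots> = EE P S t (\<lambda>y. \<bar>h y\<bar>) x"
    unfolding EE_def using mc_nonneg[OF a] by (intro sum.cong refl) (simp add: abs_mult)
  finally show ?thesis .
qed

definition mix :: "('s \<Rightarrow> nat set) \<Rightarrow> nat \<Rightarrow> 's \<Rightarrow> real" where
  "mix sel n y = (if sel y = {} \<or> sel y = {..<n} then 0 else 1)"

lemma EE_closed:
  assumes st: "stoch P S"
    and closed: "\<And>x y. x \<in> S \<Longrightarrow> y \<in> S \<Longrightarrow> sel x = A \<Longrightarrow> P x y \<noteq> 0 \<Longrightarrow> sel y = A"
    and hA: "\<And>y. y \<in> S \<Longrightarrow> sel y = A \<Longrightarrow> h y = v"
  shows "x \<in> S \<Longrightarrow> sel x = A \<Longrightarrow> EE P S t h x = v"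
proof (induction t arbitrary: x)
  case 0 then show ?case using st hA by (simp add: EE_0 stoch_def)
next
  case (Suc t)
  have fin: "finite S" using st by (simp add: stoch_def)
  have "EE P S (Suc t) h x = (\<Sum>z\<in>S. P x z * EE P S t h z)" by (simp add: EE_Suc fin)
  also have "\<dots> = (\<Sum>z\<in>S. P x z * v)"
  proof (rule sum.cong[OF refl])
    fix z assume z: "z \<in> S"
    show "P x z * EE P S t h z = P x z * v"
    proof (cases "P x z = 0")
      case False
      then have "sel z = A" using closed[OF Suc(2) z Suc(3)] by blast
      then show ?thesis using Suc.IH[OF z] by simp
    qed simp
  qed
  also have "\<dots> = v" using st Suc(2) by (simp add: stoch_def sum_distrib_right[symmetric])
  finally show ?case .
qed

lemma absorb_reach:
  fixes sel :: "'s \<Rightarrow> nat set" and n :: nat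
  assumes st: "stoch P S"
    and selS: "\<And>y. y \<in> S \<Longrightarrow> sel y \<subseteq> {..<n}"
    and closed: "\<And>x y. x \<in> S \<Longrightarrow> y \<in> S \<Longrightarrow> sel x = {..<n} \<Longrightarrow> P x y \<noteq> 0 \<Longrightarrow> sel y = {..<n}"
    and step: "\<And>x. x \<in> S \<Longrightarrow> sel x \<noteq> {} \<Longrightarrow> sel x \<noteq> {..<n} \<Longrightarrow>
        \<exists>a<n. a \<notin> sel x \<and> \<epsilon> \<le> EE P S 1 (\<lambda>y. if sel y = insert a (sel x) then 1 else 0) x"
    and eps: "0 \<le> \<epsilon>" "\<epsilon> \<le> 1"
  shows "x \<in> S \<Longrightarrow> sel x \<noteq> {} \<Longrightarrow> card ({..<n} - sel x) \<le> k \<Longrightarrow>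
     \<epsilon> ^ k \<le> EE P S k (\<lambda>y. if sel y = {..<n} then 1 else 0) x"
proof (induction k arbitrary: x)
  case 0
  have fD: "finite ({..<n} - sel x)" by (rule finite_Diff) simp
  have "card ({..<n} - sel x) = 0" using 0(3) by simp
  then have "{..<n} - sel x = {}" using fD by (simp only: card_0_eq)
  then have "{..<n} \<subseteq> sel x" by blast
  then have "sel x = {..<n}" using selS[OF 0(1)] by auto
  then show ?case using st 0 by (simp add: EE_0 stoch_def)
next
  case (Suc k)
  have fin: "finite S" using st by (simp add: stoch_def)
  let ?g = "\<lambda>y. if sel y = {..<n} then 1 else (0::real)"
  show ?case
  proof (cases "sel x = {..<n}")
    case True
    have "EE P S (Suc k) ?g x = 1"
    proof (rule EE_closed[where A="{..<n}" and sel=sel and v=1])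
      show "sel y = {..<n}" if "x \<in> S" "y \<in> S" "sel x = {..<n}" "P x y \<noteq> 0" for x y
        using closed that by blast
    qed (use st Suc True in auto)
    moreover have "\<epsilon> ^ Suc k \<le> 1" using eps by (intro power_le_one) auto
    ultimately show ?thesis by simp
  next
    case False
    obtain a where a: "a < n" "a \<notin> sel x"
      and ge: "\<epsilon> \<le> EE P S 1 (\<lambda>y. if sel y = insert a (sel x) then 1 else 0) x"
      using step[OF Suc(2,3) False] by blast
    let ?X = "insert a (sel x)"
    have sub: "sel x \<subseteq> {..<n}" using selS Suc(2) by auto
    have cardlt: "card ({..<n} - ?X) \<le> k"
    proof -
      have "{..<n} - ?X = ({..<n} - sel x) - {a}" by auto
      moreover have "a \<in> {..<n} - sel x" using a by auto
      ultimately have "card ({..<n} - ?X) = card ({..<n} - sel x) - 1" by (simp add: card_Diff_singleton)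
      moreover have "card ({..<n} - sel x) > 0" using \<open>a \<in> {..<n} - sel x\<close> by (auto simp: card_gt_0_iff)
      ultimately show ?thesis using Suc(4) by simp
    qed
    have "EE P S (Suc k) ?g x = (\<Sum>z\<in>S. P x z * EE P S k ?g z)" by (simp add: EE_Suc fin)
    also have "\<dots> \<ge> (\<Sum>z\<in>S. P x z * ((if sel z = ?X then 1 else 0) * \<epsilon> ^ k))"
    proof (rule sum_mono)
      fix z assume z: "z \<in> S"
      have "(if sel z = ?X then 1 else 0) * \<epsilon> ^ k \<le> EE P S k ?g z"
      proof (cases "sel z = ?X")
        case True
        then show ?thesis using Suc.IH[OF z] cardlt by simp
      next
        case False
        then show ?thesis using EE_nonneg[OF st z] by simp
      qed
      then show "P x z * ((if sel z = ?X then 1 else 0) * \<epsilon> ^ k) \<le> P x z * EE P S k ?g z"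
        using st Suc(2) z by (intro mult_left_mono) (auto simp: stoch_def)
    qed
    also have "(\<Sum>z\<in>S. P x z * ((if sel z = ?X then 1 else 0) * \<epsilon> ^ k))
        = EE P S 1 (\<lambda>y. if sel y = ?X then 1 else 0) x * \<epsilon> ^ k"
      unfolding EE_1[OF fin] by (simp add: sum_distrib_right mult.assoc)
    also have "\<dots> \<ge> \<epsilon> * \<epsilon> ^ k" using ge eps by (intro mult_right_mono) auto
    finally show ?thesis by simp
  qed
qed

lemma absorb_generic:
  fixes sel :: "'s \<Rightarrow> nat set" and n :: nat
  assumes st: "stoch P S"
    and selS: "\<And>y. y \<in> S \<Longrightarrow> sel y \<subseteq> {..<n}"
    and closed: "\<And>x y. x \<in> S \<Longrightarrow> y \<in> S \<Longrightarrow> sel x = {} \<or> sel x = {..<n} \<Longrightarrow> P x y \<noteq> 0 \<Longrightarrow> sel y = sel x"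
    and step: "\<And>x. x \<in> S \<Longrightarrow> sel x \<noteq> {} \<Longrightarrow> sel x \<noteq> {..<n} \<Longrightarrow>
        \<exists>a<n. a \<notin> sel x \<and> \<epsilon> \<le> EE P S 1 (\<lambda>y. if sel y = insert a (sel x) then 1 else 0) x"
    and eps: "0 \<le> \<epsilon>" "\<epsilon> \<le> 1" and n: "n > 0"
    and x: "x \<in> S"
  shows "EE P S t (mix sel n) x \<le> (1 - \<epsilon> ^ n) ^ (t div n)"
proof -
  have fin: "finite S" using st by (simp add: stoch_def)
  have mono_mix: "EE P S k (mix sel n) z = 0" if "z \<in> S" "sel z = {} \<or> sel z = {..<n}" for z k
  proof -
    from that(2) show ?thesis
    proof
      assume h: "sel z = {}"
      show ?thesis
      proof (rule EE_closed[where A="{}" and v=0 and sel=sel])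
        show "sel y = {}" if "x \<in> S" "y \<in> S" "sel x = {}" "P x y \<noteq> 0" for x y
          using closed[OF that(1,2) _ that(4)] that(3) by simp
      qed (use st that h in \<open>auto simp: mix_def\<close>)
    next
      assume h: "sel z = {..<n}"
      show ?thesis
      proof (rule EE_closed[where A="{..<n}" and v=0 and sel=sel])
        show "sel y = {..<n}" if "x \<in> S" "y \<in> S" "sel x = {..<n}" "P x y \<noteq> 0" for x y
          using closed[OF that(1,2) _ that(4)] that(3) by simp
      qed (use st that h in \<open>auto simp: mix_def\<close>)
    qed
  qed
  have mix01: "0 \<le> mix sel n y" "mix sel n y \<le> 1" for y by (auto simp: mix_def)
  have one_step: "EE P S 1 (mix sel n) z \<le> mix sel n z" if z: "z \<in> S" for z
  proof (cases "sel z = {} \<or> sel z = {..<n}")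
    case True then show ?thesis using mono_mix[OF z True] by (simp add: mix_def)
  next
    case False
    have "EE P S 1 (mix sel n) z \<le> EE P S 1 (\<lambda>_. 1) z" by (rule EE_mono[OF st z]) (simp add: mix01)
    then show ?thesis using False EE_const[OF st z] by (simp add: mix_def)
  qed
  have dec: "EE P S (t + d) (mix sel n) x \<le> EE P S t (mix sel n) x" for t d
  proof (induction d)
    case (Suc d)
    have "EE P S (Suc (t + d)) (mix sel n) x = EE P S (t + d) (EE P S 1 (mix sel n)) x"
      by (rule EE_Suc_last[OF fin x])
    also have "\<dots> \<le> EE P S (t + d) (mix sel n) x" by (rule EE_mono[OF st x one_step])
    finally show ?case using Suc by simp
  qed simp
  have nstep: "EE P S n (mix sel n) z \<le> (1 - \<epsilon> ^ n) * mix sel n z" if z: "z \<in> S" for z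
  proof (cases "sel z = {} \<or> sel z = {..<n}")
    case True then show ?thesis using mono_mix[OF z True] by (simp add: mix_def)
  next
    case False
    have card: "card ({..<n} - sel z) \<le> n"
      by (metis Diff_subset card_lessThan card_mono finite_lessThan)
    have r: "\<epsilon> ^ n \<le> EE P S n (\<lambda>y. if sel y = {..<n} then 1 else 0) z"
    proof (rule absorb_reach[OF st selS _ step eps z _ card])
      show "sel y = {..<n}" if "x \<in> S" "y \<in> S" "sel x = {..<n}" "P x y \<noteq> 0" for x y
        using closed[OF that(1,2) _ that(4)] that(3) by simp
    qed (use False in auto)
    have "EE P S n (mix sel n) z \<le> EE P S n (\<lambda>y. 1 - (if sel y = {..<n} then 1 else 0)) z"
      by (rule EE_mono[OF st z]) (auto simp: mix_def)
    also have "\<dots> = 1 - EE P S n (\<lambda>y. if sel y = {..<n} then 1 else 0) z"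
      using EE_diff[of P S n "\<lambda>_. 1"] EE_const[OF st z] by simp
    finally show ?thesis using r False by (simp add: mix_def)
  qed
  have blocks: "EE P S (k * n) (mix sel n) x \<le> (1 - \<epsilon> ^ n) ^ k" for k
  proof (induction k)
    case 0 then show ?case using mix01 by (simp add: EE_0 fin x)
  next
    case (Suc k)
    have "EE P S (Suc k * n) (mix sel n) x = EE P S (k * n) (EE P S n (mix sel n)) x"
      using EE_add[OF fin x, of P "k * n" n] by (simp add: add.commute)
    also have "\<dots> \<le> EE P S (k * n) (\<lambda>y. (1 - \<epsilon> ^ n) * mix sel n y) x"
      by (rule EE_mono[OF st x nstep])
    also have "\<dots> = (1 - \<epsilon> ^ n) * EE P S (k * n) (mix sel n) x" by (rule EE_cmult)
    also have "\<dots> \<le> (1 - \<epsilon> ^ n) * (1 - \<epsilon> ^ n) ^ k"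
      using Suc eps by (intro mult_left_mono) (auto simp: power_le_one)
    finally show ?case by simp
  qed
  have "t = (t div n) * n + t mod n" by simp
  then have "EE P S t (mix sel n) x \<le> EE P S ((t div n) * n) (mix sel n) x"
    using dec[of "(t div n) * n" "t mod n"] by metis
  then show ?thesis using blocks[of "t div n"] by linarith
qed

lemma summable_div_pow:
  fixes q :: real
  assumes "0 < q" "q < 1" "n > 0"
  shows "summable (\<lambda>t. q ^ (t div n))"
proof -
  define l where "l = q powr (1 / real n)"
  have l: "0 < l" "l < 1" using assms powr_less_mono2[of "1 / real n" q 1] by (auto simp: l_def)
  have bound: "q ^ (t div n) \<le> l ^ t / q" for t
  proof -
    have "real (t div n) \<ge> real t / real n - 1"
    proof -
      have "real t = real (t div n) * real n + real (t mod n)"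
        by (metis of_nat_add of_nat_mult div_mult_mod_eq)
      moreover have "real (t mod n) < real n" using assms by simp
      ultimately have "real t / real n < real (t div n) + 1"
        using assms by (simp add: field_simps)
      then show ?thesis by simp
    qed
    then have "q powr real (t div n) \<le> q powr (real t / real n - 1)"
      using assms by (intro powr_mono') auto
    also have "q powr (real t / real n - 1) = l ^ t / q"
    proof -
      have "l ^ t = l powr real t" using l by (simp add: powr_realpow)
      also have "\<dots> = q powr (real t / real n)" unfolding l_def powr_powr by simp
      finally show ?thesis using assms by (simp add: powr_diff)
    qed
    finally show ?thesis using assms by (simp add: powr_realpow)
  qed
  show ?thesis
    by (rule summable_comparison_test[of _ "\<lambda>t. l ^ t / q"])
       (use bound assms l in \<open>auto intro!: summable_divide summable_geometric\<close>)
qed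

context
  fixes N :: nat and w :: "nat \<Rightarrow> nat \<Rightarrow> real"
  assumes V: "valid_layer N w"
begin

lemma vl_sym: "i < N \<Longrightarrow> j < N \<Longrightarrow> w i j = w j i"
  using V by (simp add: valid_layer_def)
lemma vl_nonneg: "i < N \<Longrightarrow> j < N \<Longrightarrow> 0 \<le> w i j"
  using V by (simp add: valid_layer_def)
lemma vl_spos: "i < N \<Longrightarrow> 0 < strength N w i"
  using V by (simp add: valid_layer_def)
lemma pmat_nonneg: "i < N \<Longrightarrow> j < N \<Longrightarrow> 0 \<le> pmat N w i j"
  unfolding pmat_def by (intro divide_nonneg_pos vl_nonneg vl_spos)
lemma pmat_rowsum: "i < N \<Longrightarrow> (\<Sum>j<N. pmat N w i j) = 1"
  using vl_spos[of i] by (simp add: pmat_def sum_divide_distrib[symmetric] strength_def)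
lemma pmat_pos: "i < N \<Longrightarrow> j < N \<Longrightarrow> 0 < w i j \<Longrightarrow> 0 < pmat N w i j"
  using vl_spos[of i] by (simp add: pmat_def)
lemma pmat_le1: "i < N \<Longrightarrow> j < N \<Longrightarrow> pmat N w i j \<le> 1"
proof -
  assume a: "i < N" "j < N"
  have "pmat N w i j \<le> (\<Sum>k<N. pmat N w i k)"
    by (rule member_le_sum) (use a pmat_nonneg in auto)
  then show ?thesis using pmat_rowsum a by simp
qed

lemma tot_pos: "N > 0 \<Longrightarrow> 0 < (\<Sum>k<N. strength N w k)"
  by (rule sum_pos) (auto simp: vl_spos)

lemma statdist_pos: "N > 0 \<Longrightarrow> i < N \<Longrightarrow> 0 < statdist N w i"
  using tot_pos vl_spos by (simp add: statdist_def)
lemma statdist_sum: "N > 0 \<Longrightarrow> (\<Sum>i<N. statdist N w i) = 1"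
  using tot_pos by (simp add: statdist_def sum_divide_distrib[symmetric])

lemma rev: "i < N \<Longrightarrow> j < N \<Longrightarrow> statdist N w i * pmat N w i j = statdist N w j * pmat N w j i"
  using vl_spos[of i] vl_spos[of j] vl_sym[of i j] by (simp add: statdist_def pmat_def)

lemma stat: "j < N \<Longrightarrow> (\<Sum>i<N. statdist N w i * pmat N w i j) = statdist N w j"
proof -
  assume j: "j < N"
  have "(\<Sum>i<N. statdist N w i * pmat N w i j) = (\<Sum>i<N. statdist N w j * pmat N w j i)"
    by (rule sum.cong) (auto simp: rev j)
  also have "\<dots> = statdist N w j" using pmat_rowsum[OF j] by (simp add: sum_distrib_left[symmetric])
  finally show ?thesis .
qed

lemma cross_aux:
  assumes "(\<lambda>a b. a < N \<and> b < N \<and> w a b > 0)\<^sup>*\<^sup>* u v" "u \<in> X" "v \<notin> X"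
  shows "\<exists>a<N. \<exists>b<N. a \<notin> X \<and> b \<in> X \<and> w a b > 0"
  using assms
proof (induction rule: rtranclp_induct)
  case base then show ?case by simp
next
  case (step y z)
  show ?case
  proof (cases "y \<in> X")
    case True
    then show ?thesis using step vl_sym[of y z] by auto
  next
    case False then show ?thesis using step by blast
  qed
qed

lemma cross: "X \<subseteq> {..<N} \<Longrightarrow> X \<noteq> {} \<Longrightarrow> X \<noteq> {..<N} \<Longrightarrow> \<exists>a<N. \<exists>b<N. a \<notin> X \<and> b \<in> X \<and> w a b > 0"
proof -
  assume a: "X \<subseteq> {..<N}" "X \<noteq> {}" "X \<noteq> {..<N}"
  obtain u where u: "u \<in> X" using a by auto
  obtain v where v: "v < N" "v \<notin> X" using a by auto
  have "u < N" using u a by auto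
  then have "(\<lambda>a b. a < N \<and> b < N \<and> w a b > 0)\<^sup>*\<^sup>* u v" using V v by (simp add: valid_layer_def)
  then show ?thesis using cross_aux u v by blast
qed

lemma matpow_nonneg: "i < N \<Longrightarrow> j < N \<Longrightarrow> 0 \<le> matpow N (pmat N w) n i j"
  by (induction n arbitrary: i) (auto intro!: sum_nonneg mult_nonneg_nonneg pmat_nonneg)

lemma matpow_rowsum: "i < N \<Longrightarrow> (\<Sum>j<N. matpow N (pmat N w) n i j) = 1"
proof (induction n arbitrary: i)
  case 0 then show ?case by simp
next
  case (Suc n)
  have "(\<Sum>j<N. matpow N (pmat N w) (Suc n) i j) = (\<Sum>k<N. pmat N w i k * (\<Sum>j<N. matpow N (pmat N w) n k j))"
    by (simp add: sum_distrib_left) (rule sum.swap)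
  also have "\<dots> = (\<Sum>k<N. pmat N w i k)" by (simp add: Suc.IH)
  finally show ?case using pmat_rowsum Suc by simp
qed

lemma matpow_rev: "k < N \<Longrightarrow> l < N \<Longrightarrow>
   statdist N w k * matpow N (pmat N w) n k l = statdist N w l * matpow N (pmat N w) n l k"
proof (induction n arbitrary: k l)
  case 0 then show ?case by simp
next
  case (Suc n)
  have "statdist N w k * matpow N (pmat N w) (Suc n) k l
      = (\<Sum>a<N. (statdist N w k * pmat N w k a) * matpow N (pmat N w) n a l)"
    by (simp add: sum_distrib_left mult.assoc)
  also have "\<dots> = (\<Sum>a<N. pmat N w a k * (statdist N w a * matpow N (pmat N w) n a l))"
    by (rule sum.cong) (auto simp: rev Suc.prems mult_ac)
  also have "\<dots> = (\<Sum>a<N. pmat N w a k * (statdist N w l * matpow N (pmat N w) n l a))"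
    by (rule sum.cong) (auto simp: Suc.IH Suc.prems)
  also have "\<dots> = statdist N w l * (\<Sum>a<N. matpow N (pmat N w) n l a * pmat N w a k)"
    by (simp add: sum_distrib_left mult_ac)
  also have "(\<Sum>a<N. matpow N (pmat N w) n l a * pmat N w a k) = matpow N (pmat N w) (Suc n) l k"
  proof -
    have "\<And>m i j. i < N \<Longrightarrow> j < N \<Longrightarrow> (\<Sum>a<N. matpow N (pmat N w) m i a * pmat N w a j) = matpow N (pmat N w) (Suc m) i j"
    proof -
      fix m show "\<And>i j. i < N \<Longrightarrow> j < N \<Longrightarrow> (\<Sum>a<N. matpow N (pmat N w) m i a * pmat N w a j) = matpow N (pmat N w) (Suc m) i j"
      proof (induction m)
        case 0
        have "(\<Sum>a<N. matpow N (pmat N w) 0 i a * pmat N w a j) = (\<Sum>a<N. if a = i then pmat N w a j else 0)"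
          by (rule sum.cong) auto
        also have "\<dots> = pmat N w i j" using 0 by simp
        also have "pmat N w i j = (\<Sum>a<N. pmat N w i a * (if a = j then 1 else 0))"
        proof -
          have "(\<Sum>a<N. pmat N w i a * (if a = j then 1 else 0)) = (\<Sum>a<N. if a = j then pmat N w i a else 0)"
            by (rule sum.cong) auto
          then show ?thesis using 0 by simp
        qed
        finally show ?case by simp
      next
        case (Suc m)
        have "(\<Sum>a<N. matpow N (pmat N w) (Suc m) i a * pmat N w a j)
            = (\<Sum>b<N. pmat N w i b * (\<Sum>a<N. matpow N (pmat N w) m b a * pmat N w a j))"
          by (simp add: sum_distrib_left sum_distrib_right mult.assoc) (rule sum.swap)
        then show ?case using Suc by simp
      qed
    qed
    then show ?thesis using Suc.prems by blast
  qed
  finally show ?case .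
qed

lemma matpow_stat: "l < N \<Longrightarrow> (\<Sum>k<N. statdist N w k * matpow N (pmat N w) n k l) = statdist N w l"
proof -
  assume l: "l < N"
  have "(\<Sum>k<N. statdist N w k * matpow N (pmat N w) n k l) = (\<Sum>k<N. statdist N w l * matpow N (pmat N w) n l k)"
    by (rule sum.cong) (auto simp: matpow_rev l)
  also have "\<dots> = statdist N w l" using matpow_rowsum[OF l] by (simp add: sum_distrib_left[symmetric])
  finally show ?thesis .
qed

lemma meanstate_replace:
  "a < N \<Longrightarrow> meanstate N w (replace X a b) = meanstate N w X + statdist N w a * (ind X b - ind X a)"
proof -
  assume a: "a < N"
  have "ind (replace X a b) i = ind X i + (if i = a then ind X b - ind X a else 0)" for i
    by (auto simp: ind_def replace_def)
  then show ?thesis using a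
    by (simp add: meanstate_def algebra_simps sum.distrib if_distrib[of "\<lambda>t. statdist N w i * t" for i] cong: if_cong)
qed

end

lemma ind_replace: "ind (replace X a b) i = (if i = a then ind X b else ind X i)"
  by (auto simp: ind_def replace_def)

lemma ind01: "ind X i = 0 \<or> ind X i = 1" "0 \<le> ind X i" "ind X i \<le> 1" "ind X i * ind X i = ind X i"
  by (auto simp: ind_def)

lemma replace_sub: "X \<subseteq> {..<N} \<Longrightarrow> a < N \<Longrightarrow> replace X a b \<subseteq> {..<N}"
  by (auto simp: replace_def)

definition ep :: "nat \<Rightarrow> (nat \<Rightarrow> nat \<Rightarrow> real) \<Rightarrow> (nat \<Rightarrow> real) \<Rightarrow> nat \<Rightarrow> nat \<Rightarrow> real" where
  "ep N w F a b = w a b * F b / (\<Sum>k<N. w a k * F k)"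

lemma sum_if_eq_pick:
  fixes c :: real and k :: "'a \<Rightarrow> real"
  assumes "finite A" "v \<in> A"
  shows "(\<Sum>Y\<in>A. (if Y = v then c else 0) * k Y) = c * k v"
proof -
  have "(\<Sum>Y\<in>A. (if Y = v then c else 0) * k Y) = (\<Sum>Y\<in>A. if Y = v then c * k v else 0)"
    by (rule sum.cong) auto
  then show ?thesis using assms by simp
qed

lemma LT:
  assumes X: "X \<subseteq> {..<N}"
  shows "(\<Sum>Y\<in>Pow {..<N}. layer_trans N w F X Y * k Y)
       = (\<Sum>a<N. \<Sum>b<N. (1 / real N) * ep N w F a b * k (replace X a b))"
proof -
  have "(\<Sum>Y\<in>Pow {..<N}. layer_trans N w F X Y * k Y)
      = (\<Sum>Y\<in>Pow {..<N}. \<Sum>a<N. \<Sum>b<N. (if Y = replace X a b then (1 / real N) * ep N w F a b else 0) * k Y)"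
    unfolding layer_trans_def ep_def
    by (rule sum.cong) (auto simp: sum_distrib_left sum_distrib_right intro!: sum.cong)
  also have "\<dots> = (\<Sum>a<N. \<Sum>Y\<in>Pow {..<N}. \<Sum>b<N. (if Y = replace X a b then (1 / real N) * ep N w F a b else 0) * k Y)"
    by (rule sum.swap)
  also have "\<dots> = (\<Sum>a<N. \<Sum>b<N. \<Sum>Y\<in>Pow {..<N}. (if Y = replace X a b then (1 / real N) * ep N w F a b else 0) * k Y)"
    by (rule sum.cong[OF refl], rule sum.swap)
  also have "\<dots> = (\<Sum>a<N. \<Sum>b<N. (1 / real N) * ep N w F a b * k (replace X a b))"
    by (intro sum.cong refl sum_if_eq_pick) (use X in \<open>auto simp: replace_def\<close>)
  finally show ?thesis .
qed

lemma layer_trans_nz: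
  "layer_trans N w F X Y \<noteq> 0 \<Longrightarrow> \<exists>a<N. \<exists>b<N. Y = replace X a b"
  unfolding layer_trans_def by (rule ccontr) auto

lemma layer_trans_nonneg:
  assumes "\<And>a b. a < N \<Longrightarrow> b < N \<Longrightarrow> 0 \<le> ep N w F a b"
  shows "0 \<le> layer_trans N w F X Y"
  unfolding layer_trans_def using assms[unfolded ep_def]
  by (intro sum_nonneg mult_nonneg_nonneg) auto

lemma eps_exists:
  assumes V: "valid_layer N w" and N: "N > 0"
  shows "\<exists>\<epsilon>>0. \<epsilon> \<le> 1/2 \<and> (\<forall>a<N. \<forall>b<N. 0 < w a b \<longrightarrow> \<epsilon> \<le> pmat N w a b / (3 * real N))"
proof -
  define E where "E = (\<lambda>(a, b). pmat N w a b / (3 * real N)) ` {(a, b). a < N \<and> b < N \<and> 0 < w a b}"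
  have fin: "finite E" unfolding E_def
    by (rule finite_imageI, rule finite_subset[of _ "{..<N} \<times> {..<N}"]) auto
  have pos: "\<forall>e\<in>E. 0 < e" unfolding E_def using pmat_pos[OF V] N by auto
  define \<epsilon> where "\<epsilon> = Min (insert (1/2) E)"
  have "0 < \<epsilon>" unfolding \<epsilon>_def using fin pos by (subst Min_gr_iff) auto
  moreover have "\<epsilon> \<le> 1/2" unfolding \<epsilon>_def by (rule Min_le) (use fin in auto)
  moreover have "\<forall>a<N. \<forall>b<N. 0 < w a b \<longrightarrow> \<epsilon> \<le> pmat N w a b / (3 * real N)"
    unfolding \<epsilon>_def E_def using fin[unfolded E_def] by (auto intro!: Min_le)
  ultimately show ?thesis by blast
qed

locale model =
  fixes N :: nat and w1 w2 :: "nat \<Rightarrow> nat \<Rightarrow> real" and b c r :: real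
  assumes N2: "2 \<le> N" and V1: "valid_layer N w1" and V2: "valid_layer N w2"
begin

abbreviation "S \<equiv> states N"
abbreviation "T \<delta> \<equiv> trans N w1 w2 b c r \<delta>"
abbreviation "Fe \<delta> x \<equiv> fecundity N w1 b c r \<delta> x"
abbreviation "u x \<equiv> payoff N w1 b c r x"
definition "Ub = \<bar>c\<bar> + \<bar>b\<bar> + \<bar>r - 1\<bar> + 1"
definition "d0 = 1 / (2 * Ub)"

lemma Npos: "N > 0" using N2 by simp
lemma Ub_pos: "Ub \<ge> 1" by (simp add: Ub_def)
lemma d0_pos: "d0 > 0" using Ub_pos by (simp add: d0_def)

lemma finS: "finite S" by (simp add: states_def)
lemma S_sub: "x \<in> S \<Longrightarrow> fst x \<subseteq> {..<N} \<and> snd x \<subseteq> {..<N}"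
  by (auto simp: states_def)

lemma payoff_bound: "i < N \<Longrightarrow> \<bar>u x i\<bar> \<le> Ub"
proof -
  assume i: "i < N"
  have s: "\<bar>\<Sum>j<N. b * pmat N w1 i j * ind (fst x) j\<bar> \<le> \<bar>b\<bar>"
  proof -
    have "\<bar>\<Sum>j<N. b * pmat N w1 i j * ind (fst x) j\<bar> \<le> (\<Sum>j<N. \<bar>b\<bar> * pmat N w1 i j)"
      by (rule order_trans[OF sum_abs], rule sum_mono)
         (use pmat_nonneg[OF V1 i] ind01 in \<open>auto simp: abs_mult intro!: mult_left_le\<close>)
    also have "\<dots> = \<bar>b\<bar>" using pmat_rowsum[OF V1 i] by (simp add: sum_distrib_left[symmetric])
    finally show ?thesis .
  qed
  have "\<bar>- c * ind (fst x) i\<bar> \<le> \<bar>c\<bar>" using ind01[of "fst x" i] by (auto simp: abs_mult)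
  moreover have "\<bar>(r - 1) * ind (snd x) i\<bar> \<le> \<bar>r - 1\<bar>" using ind01[of "snd x" i] by (auto simp: abs_mult)
  ultimately show ?thesis using s unfolding payoff_def Ub_def by linarith
qed

lemma F_bounds: "\<delta> \<in> {0..d0} \<Longrightarrow> i < N \<Longrightarrow> 1/2 \<le> Fe \<delta> x i \<and> Fe \<delta> x i \<le> 3/2"
proof -
  assume d: "\<delta> \<in> {0..d0}" and i: "i < N"
  have "\<bar>\<delta> * u x i\<bar> \<le> d0 * Ub"
    using d payoff_bound[OF i, of x] by (auto simp: abs_mult intro!: mult_mono)
  also have "d0 * Ub = 1/2" using Ub_pos by (simp add: d0_def)
  finally show ?thesis by (auto simp: fecundity_def)
qed

lemma strength_mult: "(\<Sum>k<N. w a k * z) = strength N w a * z"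
  by (simp add: strength_def sum_distrib_right)

lemma den_bounds:
  assumes V: "valid_layer N w" and d: "\<delta> \<in> {0..d0}" and a: "a < N"
  shows "strength N w a / 2 \<le> (\<Sum>k<N. w a k * Fe \<delta> x k)"
    and "(\<Sum>k<N. w a k * Fe \<delta> x k) \<le> 3/2 * strength N w a"
proof -
  have e1: "(\<Sum>k<N. w a k * (1/2)) = strength N w a * (1/2)" by (rule strength_mult)
  have e2: "(\<Sum>k<N. w a k * (3/2)) = strength N w a * (3/2)" by (rule strength_mult)
  have "(\<Sum>k<N. w a k * (1/2)) \<le> (\<Sum>k<N. w a k * Fe \<delta> x k)"
    by (rule sum_mono, rule mult_left_mono) (use F_bounds[OF d] vl_nonneg[OF V a] in auto)
  then show "strength N w a / 2 \<le> (\<Sum>k<N. w a k * Fe \<delta> x k)" using e1 by linarith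
  have "(\<Sum>k<N. w a k * Fe \<delta> x k) \<le> (\<Sum>k<N. w a k * (3/2))"
    by (rule sum_mono, rule mult_left_mono) (use F_bounds[OF d] vl_nonneg[OF V a] in auto)
  then show "(\<Sum>k<N. w a k * Fe \<delta> x k) \<le> 3/2 * strength N w a" using e2 by linarith
qed

lemma den_pos: "valid_layer N w \<Longrightarrow> \<delta> \<in> {0..d0} \<Longrightarrow> a < N \<Longrightarrow> 0 < (\<Sum>k<N. w a k * Fe \<delta> x k)"
  using den_bounds(1)[of w \<delta> a x] vl_spos[of N w a] by linarith

lemma ep_nonneg: "valid_layer N w \<Longrightarrow> \<delta> \<in> {0..d0} \<Longrightarrow> a < N \<Longrightarrow> b' < N \<Longrightarrow> 0 \<le> ep N w (Fe \<delta> x) a b'"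
  unfolding ep_def using den_pos[of w \<delta> a x] F_bounds[of \<delta> b' x] vl_nonneg[of N w a b']
  by (intro divide_nonneg_pos mult_nonneg_nonneg) auto

lemma ep_sum: "valid_layer N w \<Longrightarrow> \<delta> \<in> {0..d0} \<Longrightarrow> a < N \<Longrightarrow> (\<Sum>b'<N. ep N w (Fe \<delta> x) a b') = 1"
  unfolding ep_def using den_pos[of w \<delta> a x] by (simp add: sum_divide_distrib[symmetric])

lemma ep_lower: "valid_layer N w \<Longrightarrow> \<delta> \<in> {0..d0} \<Longrightarrow> a < N \<Longrightarrow> b' < N \<Longrightarrow> pmat N w a b' / 3 \<le> ep N w (Fe \<delta> x) a b'"
proof -
  assume V: "valid_layer N w" and d: "\<delta> \<in> {0..d0}" and a: "a < N" and b': "b' < N"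
  have s: "0 < strength N w a" using vl_spos[OF V a] .
  have D: "0 < (\<Sum>k<N. w a k * Fe \<delta> x k)" using den_pos[OF V d a] .
  have "pmat N w a b' / 3 = w a b' * (1/2) / (3/2 * strength N w a)" using s by (simp add: pmat_def)
  also have "\<dots> \<le> w a b' * Fe \<delta> x b' / (3/2 * strength N w a)"
    using F_bounds[OF d b', of x] vl_nonneg[OF V a b'] s by (intro divide_right_mono mult_left_mono) auto
  also have "\<dots> \<le> w a b' * Fe \<delta> x b' / (\<Sum>k<N. w a k * Fe \<delta> x k)"
    using den_bounds[OF V d a, of x] D F_bounds[OF d b', of x] vl_nonneg[OF V a b']
    by (intro divide_left_mono mult_nonneg_nonneg mult_pos_pos) auto
  finally show ?thesis by (simp add: ep_def)
qed

lemma master: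
  assumes x: "x \<in> S"
  shows "EE (T \<delta>) S 1 h x = (\<Sum>a<N. \<Sum>b'<N. (1 / real N) * ep N w1 (Fe \<delta> x) a b' *
      (\<Sum>a2<N. \<Sum>b2<N. (1 / real N) * ep N w2 (Fe \<delta> x) a2 b2 * h (replace (fst x) a b', replace (snd x) a2 b2)))"
proof -
  have "EE (T \<delta>) S 1 h x = (\<Sum>y\<in>Pow {..<N} \<times> Pow {..<N}. T \<delta> x y * h y)"
    by (simp only: EE_1[OF finS]) (simp add: states_def)
  also have "\<dots> = (\<Sum>Y1\<in>Pow {..<N}. \<Sum>Y2\<in>Pow {..<N}. T \<delta> x (Y1, Y2) * h (Y1, Y2))"
    unfolding sum.cartesian_product by (simp add: case_prod_unfold)
  also have "\<dots> = (\<Sum>Y1\<in>Pow {..<N}. layer_trans N w1 (Fe \<delta> x) (fst x) Y1 *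
       (\<Sum>Y2\<in>Pow {..<N}. layer_trans N w2 (Fe \<delta> x) (snd x) Y2 * h (Y1, Y2)))"
    by (simp add: trans_def sum_distrib_left mult.assoc)
  also have "\<dots> = (\<Sum>Y1\<in>Pow {..<N}. layer_trans N w1 (Fe \<delta> x) (fst x) Y1 *
       (\<Sum>a2<N. \<Sum>b2<N. (1 / real N) * ep N w2 (Fe \<delta> x) a2 b2 * h (Y1, replace (snd x) a2 b2)))"
    using S_sub[OF x] by (simp add: LT)
  also have "\<dots> = (\<Sum>a<N. \<Sum>b'<N. (1 / real N) * ep N w1 (Fe \<delta> x) a b' *
      (\<Sum>a2<N. \<Sum>b2<N. (1 / real N) * ep N w2 (Fe \<delta> x) a2 b2 * h (replace (fst x) a b', replace (snd x) a2 b2)))"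
    by (rule LT[where k="\<lambda>Y1. \<Sum>a2<N. \<Sum>b2<N. (1 / real N) * ep N w2 (Fe \<delta> x) a2 b2 * h (Y1, replace (snd x) a2 b2)"])
       (use S_sub[OF x] in auto)
  finally show ?thesis .
qed

end

definition epsw :: "nat \<Rightarrow> (nat \<Rightarrow> nat \<Rightarrow> real) \<Rightarrow> real" where
  "epsw N w = (SOME \<epsilon>. \<epsilon> > 0 \<and> \<epsilon> \<le> 1/2 \<and> (\<forall>a<N. \<forall>b<N. 0 < w a b \<longrightarrow> \<epsilon> \<le> pmat N w a b / (3 * real N)))"

lemma epsw_props:
  assumes "valid_layer N w" "N > 0"
  shows "epsw N w > 0" "epsw N w \<le> 1/2" "\<And>a b. a < N \<Longrightarrow> b < N \<Longrightarrow> 0 < w a b \<Longrightarrow> epsw N w \<le> pmat N w a b / (3 * real N)"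
  using someI_ex[OF eps_exists[OF assms]] unfolding epsw_def[symmetric] by auto

lemma replace_mono: "X = {} \<or> X = {..<N} \<Longrightarrow> a < N \<Longrightarrow> b < N \<Longrightarrow> replace X a b = X"
  by (auto simp: replace_def)

lemma sum_ge_single2:
  fixes g :: "nat \<Rightarrow> nat \<Rightarrow> real"
  assumes "\<And>i j. i < N \<Longrightarrow> j < N \<Longrightarrow> 0 \<le> g i j" "a < N" "b < N"
  shows "g a b \<le> (\<Sum>i<N. \<Sum>j<N. g i j)"
proof -
  have "g a b \<le> (\<Sum>j<N. g a j)" by (rule member_le_sum) (use assms in auto)
  also have "\<dots> \<le> (\<Sum>i<N. \<Sum>j<N. g i j)" by (rule member_le_sum[of a, where f="\<lambda>i. \<Sum>j<N. g i j"]) (use assms in \<open>auto intro!: sum_nonneg\<close>)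
  finally show ?thesis .
qed

context model begin

definition "epsm = min (epsw N w1) (epsw N w2)"
definition "qq = 1 - epsm ^ N"

lemma epsm: "0 < epsm" "epsm \<le> 1/2"
  using epsw_props[OF V1 Npos] epsw_props[OF V2 Npos] by (auto simp: epsm_def)

lemma qq: "0 < qq" "qq < 1"
proof -
  have "epsm ^ N \<le> (1/2) ^ N" using epsm by (intro power_mono) auto
  also have "\<dots> < 1" using Npos by (simp add: power_less_one_iff)
  finally show "0 < qq" by (simp add: qq_def)
  show "qq < 1" using epsm by (simp add: qq_def)
qed

lemma summable_qq: "summable (\<lambda>t. qq ^ (t div N))"
  by (rule summable_div_pow[OF qq Npos])

lemma inner_one: "valid_layer N w \<Longrightarrow> \<delta> \<in> {0..d0} \<Longrightarrow> (\<Sum>a<N. \<Sum>b'<N. (1 / real N) * ep N w (Fe \<delta> x) a b') = 1"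
proof -
  assume V: "valid_layer N w" and d: "\<delta> \<in> {0..d0}"
  have "(\<Sum>a<N. \<Sum>b'<N. (1 / real N) * ep N w (Fe \<delta> x) a b') = (\<Sum>a<N. (1 / real N) * (\<Sum>b'<N. ep N w (Fe \<delta> x) a b'))"
    by (simp only: sum_distrib_left)
  also have "\<dots> = (\<Sum>a<N. (1 / real N))" using ep_sum[OF V d] by simp
  finally show ?thesis using Npos by simp
qed

lemma EE_fst:
  assumes x: "x \<in> S" and d: "\<delta> \<in> {0..d0}"
  shows "EE (T \<delta>) S 1 (\<lambda>y. g (fst y)) x = (\<Sum>a<N. \<Sum>b'<N. (1 / real N) * ep N w1 (Fe \<delta> x) a b' * g (replace (fst x) a b'))"
proof -
  have "(\<Sum>a2<N. \<Sum>b2<N. (1 / real N) * ep N w2 (Fe \<delta> x) a2 b2 * g Y) = (\<Sum>a2<N. \<Sum>b2<N. (1 / real N) * ep N w2 (Fe \<delta> x) a2 b2) * g Y" for Y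
    by (simp only: sum_distrib_right)
  then have inner: "(\<Sum>a2<N. \<Sum>b2<N. (1 / real N) * ep N w2 (Fe \<delta> x) a2 b2 * g Y) = g Y" for Y
    using inner_one[OF V2 d, of x] by simp
  show ?thesis by (simp only: master[OF x] fst_conv inner)
qed

lemma EE_snd:
  assumes x: "x \<in> S" and d: "\<delta> \<in> {0..d0}"
  shows "EE (T \<delta>) S 1 (\<lambda>y. g (snd y)) x = (\<Sum>a<N. \<Sum>b'<N. (1 / real N) * ep N w2 (Fe \<delta> x) a b' * g (replace (snd x) a b'))"
proof -
  have "(\<Sum>a<N. \<Sum>b'<N. (1 / real N) * ep N w1 (Fe \<delta> x) a b' * Z) = (\<Sum>a<N. \<Sum>b'<N. (1 / real N) * ep N w1 (Fe \<delta> x) a b') * Z" for Z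
    by (simp only: sum_distrib_right)
  then have inner: "(\<Sum>a<N. \<Sum>b'<N. (1 / real N) * ep N w1 (Fe \<delta> x) a b' * Z) = Z" for Z
    using inner_one[OF V1 d, of x] by simp
  show ?thesis by (simp only: master[OF x] snd_conv inner)
qed

lemma stochT: "\<delta> \<in> {0..d0} \<Longrightarrow> stoch (T \<delta>) S"
proof -
  assume d: "\<delta> \<in> {0..d0}"
  have nn: "0 \<le> T \<delta> x y" for x y
    unfolding trans_def
    by (intro mult_nonneg_nonneg layer_trans_nonneg ep_nonneg[OF V1 d] ep_nonneg[OF V2 d])
  have "(\<Sum>y\<in>S. T \<delta> x y) = 1" if x: "x \<in> S" for x
  proof -
    have "(\<Sum>y\<in>S. T \<delta> x y) = EE (T \<delta>) S 1 (\<lambda>y. (\<lambda>_. 1) (fst y)) x"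
      by (simp only: EE_1[OF finS]) simp
    also have "\<dots> = 1" using inner_one[OF V1 d, of x] EE_fst[OF x d, of "\<lambda>_. 1"] by simp
    finally show ?thesis .
  qed
  then show ?thesis using nn finS by (simp add: stoch_def)
qed

lemma closed_fst:
  "x \<in> S \<Longrightarrow> y \<in> S \<Longrightarrow> fst x = {} \<or> fst x = {..<N} \<Longrightarrow> T \<delta> x y \<noteq> 0 \<Longrightarrow> fst y = fst x"
  unfolding trans_def using layer_trans_nz replace_mono by (metis mult_zero_left)

lemma closed_snd:
  "x \<in> S \<Longrightarrow> y \<in> S \<Longrightarrow> snd x = {} \<or> snd x = {..<N} \<Longrightarrow> T \<delta> x y \<noteq> 0 \<Longrightarrow> snd y = snd x"
  unfolding trans_def using layer_trans_nz replace_mono by (metis mult_zero_right)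

lemma step_gen:
  assumes V: "valid_layer N w" and d: "\<delta> \<in> {0..d0}" and X: "X \<subseteq> {..<N}" "X \<noteq> {}" "X \<noteq> {..<N}"
  shows "\<exists>a<N. a \<notin> X \<and> epsw N w \<le> (\<Sum>a'<N. \<Sum>b'<N. (1 / real N) * ep N w (Fe \<delta> x) a' b' *
            (if replace X a' b' = insert a X then 1 else 0))"
proof -
  obtain a b' where ab: "a < N" "b' < N" "a \<notin> X" "b' \<in> X" "0 < w a b'" using cross[OF V X] by blast
  have "epsw N w \<le> pmat N w a b' / (3 * real N)" using epsw_props(3)[OF V Npos ab(1,2,5)] .
  also have "\<dots> = (1 / real N) * (pmat N w a b' / 3)" by simp
  also have "\<dots> \<le> (1 / real N) * ep N w (Fe \<delta> x) a b'"
    using ep_lower[OF V d ab(1,2)] by (intro mult_left_mono) auto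
  also have "\<dots> = (1 / real N) * ep N w (Fe \<delta> x) a b' * (if replace X a b' = insert a X then 1 else 0)"
    using ab by (simp add: replace_def)
  also have "\<dots> \<le> (\<Sum>a'<N. \<Sum>b2<N. (1 / real N) * ep N w (Fe \<delta> x) a' b2 * (if replace X a' b2 = insert a X then 1 else 0))"
    by (rule sum_ge_single2[OF _ ab(1,2)], intro mult_nonneg_nonneg ep_nonneg[OF V d]) auto
  finally show ?thesis using ab by blast
qed

lemma absorb_fst:
  assumes d: "\<delta> \<in> {0..d0}" and x: "x \<in> S"
  shows "EE (T \<delta>) S t (mix fst N) x \<le> qq ^ (t div N)"
  unfolding qq_def
proof (rule absorb_generic[OF stochT[OF d] _ closed_fst _ _ _ Npos x])
  show "fst y \<subseteq> {..<N}" if "y \<in> S" for y using S_sub that by blast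
  show "0 \<le> epsm" "epsm \<le> 1" using epsm by auto
  fix z assume z: "z \<in> S" "fst z \<noteq> {}" "fst z \<noteq> {..<N}"
  obtain a where a: "a < N" "a \<notin> fst z" and le: "epsw N w1 \<le> (\<Sum>a'<N. \<Sum>b'<N. (1 / real N) * ep N w1 (Fe \<delta> z) a' b' *
            (if replace (fst z) a' b' = insert a (fst z) then 1 else 0))"
    using step_gen[OF V1 d _ z(2,3), of z] S_sub[OF z(1)] by blast
  have "EE (T \<delta>) S 1 (\<lambda>y. if fst y = insert a (fst z) then 1 else 0) z
     = (\<Sum>a'<N. \<Sum>b'<N. (1 / real N) * ep N w1 (Fe \<delta> z) a' b' * (if replace (fst z) a' b' = insert a (fst z) then 1 else 0))"
    using EE_fst[OF z(1) d, of "\<lambda>Y. if Y = insert a (fst z) then 1 else 0"] by simp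
  then show "\<exists>a<N. a \<notin> fst z \<and> epsm \<le> EE (T \<delta>) S 1 (\<lambda>y. if fst y = insert a (fst z) then 1 else 0) z"
    using a le by (auto simp: epsm_def)
qed

lemma absorb_snd:
  assumes d: "\<delta> \<in> {0..d0}" and x: "x \<in> S"
  shows "EE (T \<delta>) S t (mix snd N) x \<le> qq ^ (t div N)"
  unfolding qq_def
proof (rule absorb_generic[OF stochT[OF d] _ closed_snd _ _ _ Npos x])
  show "snd y \<subseteq> {..<N}" if "y \<in> S" for y using S_sub that by blast
  show "0 \<le> epsm" "epsm \<le> 1" using epsm by auto
  fix z assume z: "z \<in> S" "snd z \<noteq> {}" "snd z \<noteq> {..<N}"
  obtain a where a: "a < N" "a \<notin> snd z" and le: "epsw N w2 \<le> (\<Sum>a'<N. \<Sum>b'<N. (1 / real N) * ep N w2 (Fe \<delta> z) a' b' *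
            (if replace (snd z) a' b' = insert a (snd z) then 1 else 0))"
    using step_gen[OF V2 d _ z(2,3), of z] S_sub[OF z(1)] by blast
  have "EE (T \<delta>) S 1 (\<lambda>y. if snd y = insert a (snd z) then 1 else 0) z
     = (\<Sum>a'<N. \<Sum>b'<N. (1 / real N) * ep N w2 (Fe \<delta> z) a' b' * (if replace (snd z) a' b' = insert a (snd z) then 1 else 0))"
    using EE_snd[OF z(1) d, of "\<lambda>Y. if Y = insert a (snd z) then 1 else 0"] by simp
  then show "\<exists>a<N. a \<notin> snd z \<and> epsm \<le> EE (T \<delta>) S 1 (\<lambda>y. if snd y = insert a (snd z) then 1 else 0) z"
    using a le by (auto simp: epsm_def)
qed

end

lemma meanstate_bounds: "valid_layer N w \<Longrightarrow> N > 0 \<Longrightarrow> 0 \<le> meanstate N w X \<and> meanstate N w X \<le> 1"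
proof -
  assume V: "valid_layer N w" and N: "N > 0"
  have "0 \<le> meanstate N w X" unfolding meanstate_def
    using statdist_pos[OF V N] ind01 by (intro sum_nonneg mult_nonneg_nonneg) (auto intro: less_imp_le)
  moreover have "meanstate N w X \<le> (\<Sum>i<N. statdist N w i)" unfolding meanstate_def
    using statdist_pos[OF V N] ind01 by (intro sum_mono) (auto intro: mult_left_le less_imp_le)
  ultimately show ?thesis using statdist_sum[OF V N] by simp
qed

lemma meanstate_empty: "meanstate N w {} = 0" by (simp add: meanstate_def ind_def)
lemma meanstate_all: "valid_layer N w \<Longrightarrow> N > 0 \<Longrightarrow> meanstate N w {..<N} = 1"
  using statdist_sum[of N w] by (simp add: meanstate_def ind_def)

context model begin

abbreviation "s1 a \<equiv> strength N w1 a"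
definition "Uu x a = (\<Sum>k<N. w1 a k * u x k)"
definition "Dd \<delta> x a = (\<Sum>k<N. w1 a k * Fe \<delta> x k)"
definition "Rf \<delta> x = (1 / real N) * (\<Sum>a<N. statdist N w1 a *
    (\<Sum>b'<N. w1 a b' * (u x b' * s1 a - Uu x a) / (s1 a * Dd \<delta> x a) * ind (fst x) b'))"
abbreviation "fm x \<equiv> meanstate N w1 (fst x)"

lemma Dd_eq: "Dd \<delta> x a = s1 a + \<delta> * Uu x a"
  by (simp add: Dd_def Uu_def fecundity_def strength_def algebra_simps sum.distrib sum_distrib_left)

lemma Dd_pos: "\<delta> \<in> {0..d0} \<Longrightarrow> a < N \<Longrightarrow> 0 < Dd \<delta> x a"
  unfolding Dd_def by (rule den_pos[OF V1])

lemma ep_diff: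
  assumes d: "\<delta> \<in> {0..d0}" and a: "a < N"
  shows "ep N w1 (Fe \<delta> x) a b' - pmat N w1 a b' = \<delta> * (w1 a b' * (u x b' * s1 a - Uu x a) / (s1 a * Dd \<delta> x a))"
proof -
  have s: "s1 a > 0" using vl_spos[OF V1 a] .
  have D: "Dd \<delta> x a > 0" using Dd_pos[OF d a] .
  have "ep N w1 (Fe \<delta> x) a b' = w1 a b' * (1 + \<delta> * u x b') / Dd \<delta> x a"
    by (simp add: ep_def Dd_def fecundity_def)
  moreover have "w1 a b' * (1 + \<delta> * u x b') / (s1 a + \<delta> * Uu x a) - w1 a b' / s1 a
      = \<delta> * (w1 a b' * (u x b' * s1 a - Uu x a) / (s1 a * (s1 a + \<delta> * Uu x a)))"
    using s D unfolding Dd_eq by (simp add: field_simps)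
  ultimately show ?thesis unfolding pmat_def Dd_eq by simp
qed

lemma drift:
  assumes x: "x \<in> S" and d: "\<delta> \<in> {0..d0}"
  shows "EE (T \<delta>) S 1 fm x = fm x + \<delta> * Rf \<delta> x"
proof -
  let ?X = "fst x"
  let ?e = "\<lambda>a b'. ep N w1 (Fe \<delta> x) a b'"
  let ?p = "\<lambda>a b'. pmat N w1 a b'"
  let ?\<pi> = "statdist N w1"
  have "EE (T \<delta>) S 1 fm x = (\<Sum>a<N. \<Sum>b'<N. (1 / real N) * ?e a b' * meanstate N w1 (replace ?X a b'))"
    using EE_fst[OF x d, of "meanstate N w1"] by simp
  also have "\<dots> = (\<Sum>a<N. \<Sum>b'<N. (1 / real N) * ?e a b' * fm x
        + (1 / real N) * ?\<pi> a * (?e a b' * ind ?X b') - (1 / real N) * ?\<pi> a * ind ?X a * ?e a b')"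
    using Npos by (intro sum.cong refl) (auto simp: meanstate_replace[OF V1] field_simps)
  also have "\<dots> = (\<Sum>a<N. (1 / real N) * (\<Sum>b'<N. ?e a b') * fm x
        + (1 / real N) * ?\<pi> a * (\<Sum>b'<N. ?e a b' * ind ?X b') - (1 / real N) * ?\<pi> a * ind ?X a * (\<Sum>b'<N. ?e a b'))"
    by (simp add: sum.distrib sum_subtractf sum_distrib_left sum_distrib_right mult.assoc)
  also have "\<dots> = (\<Sum>a<N. (1 / real N) * fm x
        + (1 / real N) * ?\<pi> a * (\<Sum>b'<N. ?e a b' * ind ?X b') - (1 / real N) * ?\<pi> a * ind ?X a)"
    by (intro sum.cong refl) (simp add: ep_sum[OF V1 d])
  also have "\<dots> = fm x + (1 / real N) * ((\<Sum>a<N. ?\<pi> a * (\<Sum>b'<N. ?e a b' * ind ?X b')) - (\<Sum>a<N. ?\<pi> a * ind ?X a))"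
    by (simp only: sum.distrib sum_subtractf mult.assoc sum_distrib_left[symmetric]) (simp add: right_diff_distrib Npos)
  also have "(\<Sum>a<N. ?\<pi> a * ind ?X a) = (\<Sum>a<N. ?\<pi> a * (\<Sum>b'<N. ?p a b' * ind ?X b'))"
  proof -
    have "(\<Sum>a<N. ?\<pi> a * (\<Sum>b'<N. ?p a b' * ind ?X b')) = (\<Sum>b'<N. (\<Sum>a<N. ?\<pi> a * ?p a b') * ind ?X b')"
      by (simp add: sum_distrib_left sum_distrib_right mult.assoc) (rule sum.swap)
    also have "\<dots> = (\<Sum>b'<N. ?\<pi> b' * ind ?X b')" by (intro sum.cong refl) (simp add: stat[OF V1])
    finally show ?thesis by simp
  qed
  also have "(\<Sum>a<N. ?\<pi> a * (\<Sum>b'<N. ?e a b' * ind ?X b')) - (\<Sum>a<N. ?\<pi> a * (\<Sum>b'<N. ?p a b' * ind ?X b'))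
      = (\<Sum>a<N. ?\<pi> a * (\<Sum>b'<N. (?e a b' - ?p a b') * ind ?X b'))"
    by (simp add: sum_subtractf right_diff_distrib left_diff_distrib)
  also have "\<dots> = (\<Sum>a<N. ?\<pi> a * (\<Sum>b'<N. \<delta> * (w1 a b' * (u x b' * s1 a - Uu x a) / (s1 a * Dd \<delta> x a)) * ind ?X b'))"
    by (intro sum.cong refl) (simp add: ep_diff[OF d])
  finally show ?thesis unfolding Rf_def
    by (simp add: sum_distrib_left sum_distrib_right mult_ac)
qed

lemma Rf_mono: "fst x = {} \<or> fst x = {..<N} \<Longrightarrow> Rf \<delta> x = 0"
proof -
  assume h: "fst x = {} \<or> fst x = {..<N}"
  show ?thesis
  proof (cases "fst x = {}")
    case True then show ?thesis by (simp add: Rf_def ind_def)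
  next
    case False
    then have all: "fst x = {..<N}" using h by simp
    have "(\<Sum>b'<N. w1 a b' * (u x b' * s1 a - Uu x a) / (s1 a * Dd \<delta> x a) * ind (fst x) b') = 0" for a
    proof -
      have "(\<Sum>b'<N. w1 a b' * (u x b' * s1 a - Uu x a) / (s1 a * Dd \<delta> x a) * ind (fst x) b')
          = (\<Sum>b'<N. s1 a * (w1 a b' * u x b') - Uu x a * w1 a b') / (s1 a * Dd \<delta> x a)"
        by (subst sum_divide_distrib, rule sum.cong) (auto simp: all ind_def algebra_simps)
      also have "(\<Sum>b'<N. s1 a * (w1 a b' * u x b') - Uu x a * w1 a b') = s1 a * Uu x a - Uu x a * s1 a"
        by (simp add: sum_subtractf sum_distrib_left[symmetric] Uu_def strength_def)
      finally show ?thesis by simp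
    qed
    then show ?thesis by (simp add: Rf_def)
  qed
qed

lemma Uu_bound: "a < N \<Longrightarrow> \<bar>Uu x a\<bar> \<le> Ub * s1 a"
proof -
  assume a: "a < N"
  have "\<bar>Uu x a\<bar> \<le> (\<Sum>k<N. \<bar>w1 a k * u x k\<bar>)" unfolding Uu_def by (rule sum_abs)
  also have "\<dots> \<le> (\<Sum>k<N. w1 a k * Ub)"
  proof (rule sum_mono)
    fix k assume k: "k \<in> {..<N}"
    have "\<bar>w1 a k * u x k\<bar> = w1 a k * \<bar>u x k\<bar>" using vl_nonneg[OF V1 a, of k] k by (simp add: abs_mult)
    also have "\<dots> \<le> w1 a k * Ub" using vl_nonneg[OF V1 a, of k] k payoff_bound[of k x] by (intro mult_left_mono) auto
    finally show "\<bar>w1 a k * u x k\<bar> \<le> w1 a k * Ub" .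
  qed
  also have "\<dots> = Ub * s1 a" by (simp add: strength_mult mult.commute)
  finally show ?thesis .
qed

lemma Rf_bound:
  assumes d: "\<delta> \<in> {0..d0}"
  shows "\<bar>Rf \<delta> x\<bar> \<le> 4 * Ub"
proof -
  have inner: "\<bar>\<Sum>b'<N. w1 a b' * (u x b' * s1 a - Uu x a) / (s1 a * Dd \<delta> x a) * ind (fst x) b'\<bar> \<le> 4 * Ub"
    if a: "a < N" for a
  proof -
    have s: "s1 a > 0" using vl_spos[OF V1 a] .
    have D: "Dd \<delta> x a \<ge> s1 a / 2" unfolding Dd_def by (rule den_bounds(1)[OF V1 d a])
    have "\<bar>\<Sum>b'<N. w1 a b' * (u x b' * s1 a - Uu x a) / (s1 a * Dd \<delta> x a) * ind (fst x) b'\<bar>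
        \<le> (\<Sum>b'<N. \<bar>w1 a b' * (u x b' * s1 a - Uu x a) / (s1 a * Dd \<delta> x a) * ind (fst x) b'\<bar>)"
      by (rule sum_abs)
    also have "\<dots> \<le> (\<Sum>b'<N. w1 a b' * (4 * Ub / s1 a))"
    proof (rule sum_mono)
      fix b' assume b': "b' \<in> {..<N}"
      have w: "0 \<le> w1 a b'" using vl_nonneg[OF V1 a] b' by simp
      have num: "\<bar>u x b' * s1 a - Uu x a\<bar> \<le> 2 * Ub * s1 a"
      proof -
        have "\<bar>u x b' * s1 a\<bar> \<le> Ub * s1 a" using payoff_bound[of b' x] b' s by (simp add: abs_mult mult_right_mono)
        then show ?thesis using Uu_bound[OF a, of x] by linarith
      qed
      have den: "s1 a * (s1 a / 2) \<le> \<bar>s1 a * Dd \<delta> x a\<bar>" using s D by (simp add: abs_mult mult_left_mono)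
      have "\<bar>w1 a b' * (u x b' * s1 a - Uu x a) / (s1 a * Dd \<delta> x a) * ind (fst x) b'\<bar>
          \<le> \<bar>w1 a b' * (u x b' * s1 a - Uu x a) / (s1 a * Dd \<delta> x a)\<bar>"
        using ind01[of "fst x" b'] by (auto simp: abs_mult)
      also have "\<dots> = w1 a b' * \<bar>u x b' * s1 a - Uu x a\<bar> / \<bar>s1 a * Dd \<delta> x a\<bar>"
        using w by (simp add: abs_mult)
      also have "\<dots> \<le> w1 a b' * (2 * Ub * s1 a) / (s1 a * (s1 a / 2))"
        using w num den s Ub_pos by (intro frac_le mult_left_mono mult_nonneg_nonneg) auto
      also have "\<dots> = w1 a b' * (4 * Ub / s1 a)" using s by (simp add: field_simps)
      finally show "\<bar>w1 a b' * (u x b' * s1 a - Uu x a) / (s1 a * Dd \<delta> x a) * ind (fst x) b'\<bar> \<le> w1 a b' * (4 * Ub / s1 a)" .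
    qed
    also have "\<dots> = s1 a * (4 * Ub / s1 a)" by (rule strength_mult)
    also have "\<dots> = 4 * Ub" using s by simp
    finally show ?thesis .
  qed
  have "\<bar>Rf \<delta> x\<bar> \<le> (1 / real N) * (\<Sum>a<N. statdist N w1 a * (4 * Ub))"
    unfolding Rf_def
  proof -
    have "\<bar>\<Sum>a<N. statdist N w1 a * (\<Sum>b'<N. w1 a b' * (u x b' * s1 a - Uu x a) / (s1 a * Dd \<delta> x a) * ind (fst x) b')\<bar>
       \<le> (\<Sum>a<N. \<bar>statdist N w1 a * (\<Sum>b'<N. w1 a b' * (u x b' * s1 a - Uu x a) / (s1 a * Dd \<delta> x a) * ind (fst x) b')\<bar>)"
      by (rule sum_abs)
    also have "\<dots> \<le> (\<Sum>a<N. statdist N w1 a * (4 * Ub))"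
    proof (rule sum_mono)
      fix a assume a: "a \<in> {..<N}"
      have p: "0 \<le> statdist N w1 a" using statdist_pos[OF V1 Npos, of a] a by simp
      let ?X = "\<Sum>b'<N. w1 a b' * (u x b' * s1 a - Uu x a) / (s1 a * Dd \<delta> x a) * ind (fst x) b'"
      have "\<bar>statdist N w1 a * ?X\<bar> = statdist N w1 a * \<bar>?X\<bar>" using p by (simp add: abs_mult)
      also have "\<dots> \<le> statdist N w1 a * (4 * Ub)" using inner[of a] a p by (intro mult_left_mono) auto
      finally show "\<bar>statdist N w1 a * ?X\<bar> \<le> statdist N w1 a * (4 * Ub)" .
    qed
    finally show "\<bar>1 / real N * (\<Sum>a<N. statdist N w1 a * (\<Sum>b'<N. w1 a b' * (u x b' * s1 a - Uu x a) / (s1 a * Dd \<delta> x a) * ind (fst x) b'))\<bar>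
        \<le> 1 / real N * (\<Sum>a<N. statdist N w1 a * (4 * Ub))"
      using Npos by (simp add: abs_mult divide_right_mono)
  qed
  also have "\<dots> = (1 / real N) * (4 * Ub)" using statdist_sum[OF V1 Npos] by (simp add: sum_distrib_right[symmetric])
  also have "\<dots> \<le> 4 * Ub" using Npos Ub_pos by (simp add: field_simps)
  finally show ?thesis .
qed

lemma Rf_mix: "\<delta> \<in> {0..d0} \<Longrightarrow> \<bar>Rf \<delta> y\<bar> \<le> 4 * Ub * mix fst N y"
  using Rf_bound[of \<delta> y] Rf_mono[of y \<delta>] by (auto simp: mix_def)

lemma term_bound:
  assumes d: "\<delta> \<in> {0..d0}" and x: "x \<in> S"
  shows "\<bar>EE (T \<delta>) S k (Rf \<delta>) x\<bar> \<le> 4 * Ub * qq ^ (k div N)"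
proof -
  have "\<bar>EE (T \<delta>) S k (Rf \<delta>) x\<bar> \<le> EE (T \<delta>) S k (\<lambda>y. \<bar>Rf \<delta> y\<bar>) x" by (rule EE_abs[OF stochT[OF d] x])
  also have "\<dots> \<le> EE (T \<delta>) S k (\<lambda>y. 4 * Ub * mix fst N y) x" by (rule EE_mono[OF stochT[OF d] x Rf_mix[OF d]])
  also have "\<dots> = 4 * Ub * EE (T \<delta>) S k (mix fst N) x" by (rule EE_cmult)
  also have "\<dots> \<le> 4 * Ub * qq ^ (k div N)" using absorb_fst[OF d x] Ub_pos by simp
  finally show ?thesis .
qed

lemma telescope:
  assumes d: "\<delta> \<in> {0..d0}" and x: "x \<in> S"
  shows "EE (T \<delta>) S t fm x = fm x + \<delta> * (\<Sum>k<t. EE (T \<delta>) S k (Rf \<delta>) x)"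
proof (induction t)
  case 0 then show ?case by (simp add: EE_0[OF finS x])
next
  case (Suc t)
  have "EE (T \<delta>) S (Suc t) fm x = EE (T \<delta>) S t (EE (T \<delta>) S 1 fm) x" by (rule EE_Suc_last[OF finS x])
  also have "\<dots> = EE (T \<delta>) S t (\<lambda>y. fm y + \<delta> * Rf \<delta> y) x" by (rule EE_cong, rule drift[OF _ d])
  also have "\<dots> = EE (T \<delta>) S t fm x + \<delta> * EE (T \<delta>) S t (Rf \<delta>) x"
    by (simp add: EE_add_fun EE_cmult)
  finally show ?case using Suc by (simp add: algebra_simps)
qed

end

definition ifz :: "bool \<Rightarrow> real" where "ifz P = (if P then 1 else 0)"
lemma if_ifz: "(if P then A else (0::real)) = ifz P * A" by (simp add: ifz_def)

context model begin

definition "Hs \<delta> \<xi> = (\<Sum>k. EE (T \<delta>) S k (Rf \<delta>) \<xi>)"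
definition "indAll y = (if fst y = {..<N} then 1 else (0::real))"

lemma summable_bound: "summable (\<lambda>k. 4 * Ub * qq ^ (k div N))"
  by (rule summable_mult[OF summable_qq])

lemma summable_terms:
  assumes d: "\<delta> \<in> {0..d0}" and x: "\<xi> \<in> S"
  shows "summable (\<lambda>k. EE (T \<delta>) S k (Rf \<delta>) \<xi>)"
  by (rule summable_comparison_test[OF _ summable_bound]) (use term_bound[OF d x] in auto)

lemma qq_lim: "(\<lambda>n. qq ^ (n div N)) \<longlonglongrightarrow> 0"
  by (rule summable_LIMSEQ_zero[OF summable_qq])

lemma indAll_fm: "y \<in> S \<Longrightarrow> \<bar>indAll y - fm y\<bar> \<le> mix fst N y"
proof -
  assume y: "y \<in> S"
  have b: "0 \<le> fm y" "fm y \<le> 1" using meanstate_bounds[OF V1 Npos] by auto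
  show ?thesis
  proof (cases "fst y = {..<N}")
    case True then show ?thesis using meanstate_all[OF V1 Npos] by (simp add: indAll_def mix_def)
  next
    case False
    show ?thesis
    proof (cases "fst y = {}")
      case True then show ?thesis using False by (simp add: indAll_def mix_def meanstate_empty)
    next
      case F2: False then show ?thesis using False b by (simp add: indAll_def mix_def)
    qed
  qed
qed

lemma rho_repr:
  assumes d: "\<delta> \<in> {0..d0}" and \<xi>: "\<xi> \<in> S"
  shows "rho1 N w1 w2 b c r \<delta> \<xi> = fm \<xi> + \<delta> * Hs \<delta> \<xi>"
proof -
  have st: "stoch (T \<delta>) S" by (rule stochT[OF d])
  have seq: "(\<Sum>y\<in>{y \<in> S. fst y = {..<N}}. mc_nstep (T \<delta>) S n \<xi> y) = EE (T \<delta>) S n indAll \<xi>" for n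
    unfolding EE_def indAll_def sum.inter_filter[OF finS] by (rule sum.cong) auto
  have split: "EE (T \<delta>) S n indAll \<xi> = (fm \<xi> + \<delta> * (\<Sum>k<n. EE (T \<delta>) S k (Rf \<delta>) \<xi>)) + EE (T \<delta>) S n (\<lambda>y. indAll y - fm y) \<xi>" for n
    using telescope[OF d \<xi>, of n] EE_diff[of "T \<delta>" S n indAll fm \<xi>] by simp
  have l1: "(\<lambda>n. fm \<xi> + \<delta> * (\<Sum>k<n. EE (T \<delta>) S k (Rf \<delta>) \<xi>)) \<longlonglongrightarrow> fm \<xi> + \<delta> * Hs \<delta> \<xi>"
    unfolding Hs_def by (intro tendsto_intros summable_LIMSEQ summable_terms[OF d \<xi>])
  have l2: "(\<lambda>n. EE (T \<delta>) S n (\<lambda>y. indAll y - fm y) \<xi>) \<longlonglongrightarrow> 0"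
  proof (rule Lim_null_comparison[OF _ qq_lim])
    show "\<forall>\<^sub>F n in sequentially. norm (EE (T \<delta>) S n (\<lambda>y. indAll y - fm y) \<xi>) \<le> qq ^ (n div N)"
    proof (rule always_eventually, rule allI)
      fix n
      have "\<bar>EE (T \<delta>) S n (\<lambda>y. indAll y - fm y) \<xi>\<bar> \<le> EE (T \<delta>) S n (\<lambda>y. \<bar>indAll y - fm y\<bar>) \<xi>"
        by (rule EE_abs[OF st \<xi>])
      also have "\<dots> \<le> EE (T \<delta>) S n (mix fst N) \<xi>" by (rule EE_mono[OF st \<xi> indAll_fm])
      also have "\<dots> \<le> qq ^ (n div N)" by (rule absorb_fst[OF d \<xi>])
      finally show "norm (EE (T \<delta>) S n (\<lambda>y. indAll y - fm y) \<xi>) \<le> qq ^ (n div N)" by simp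
    qed
  qed
  have "(\<lambda>n. \<Sum>y\<in>{y \<in> S. fst y = {..<N}}. mc_nstep (T \<delta>) S n \<xi> y) \<longlonglongrightarrow> fm \<xi> + \<delta> * Hs \<delta> \<xi>"
    unfolding seq split using tendsto_add[OF l1 l2] by simp
  then show ?thesis unfolding rho1_def by (rule limI)
qed

lemma cont_fe: "continuous_on A (\<lambda>\<delta>. fecundity N w1 b c r \<delta> x k)"
  unfolding fecundity_def by (intro continuous_intros)

lemma cont_layer:
  assumes V: "valid_layer N w"
  shows "continuous_on {0..d0} (\<lambda>\<delta>. layer_trans N w (Fe \<delta> x) X Y)"
  unfolding layer_trans_def if_ifz
  by (intro continuous_intros cont_fe) (use den_pos[OF V] in \<open>auto simp: less_imp_neq[symmetric] dest: \<close>)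

lemma cont_T: "continuous_on {0..d0} (\<lambda>\<delta>. T \<delta> x z)"
  unfolding trans_def by (intro continuous_intros cont_layer V1 V2)

lemma cont_mc: "continuous_on {0..d0} (\<lambda>\<delta>. mc_nstep (T \<delta>) S k x y)"
proof (induction k arbitrary: x)
  case 0 then show ?case by simp
next
  case (Suc k) then show ?case by (simp, intro continuous_intros cont_T) auto
qed

lemma cont_Dd: "continuous_on A (\<lambda>\<delta>. Dd \<delta> x a)"
  unfolding Dd_def by (intro continuous_intros cont_fe)

lemma cont_Rf: "continuous_on {0..d0} (\<lambda>\<delta>. Rf \<delta> y)"
  unfolding Rf_def
  by (intro continuous_intros cont_Dd) (use Dd_pos vl_spos[OF V1] in \<open>auto simp: less_imp_neq[symmetric]\<close>)

lemma cont_term: "continuous_on {0..d0} (\<lambda>\<delta>. EE (T \<delta>) S k (Rf \<delta>) \<xi>)"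
  unfolding EE_def by (intro continuous_intros cont_mc cont_Rf)

lemma cont_Hs:
  assumes x: "\<xi> \<in> S"
  shows "continuous_on {0..d0} (\<lambda>\<delta>. Hs \<delta> \<xi>)"
proof -
  have ul: "uniform_limit {0..d0} (\<lambda>n \<delta>. \<Sum>i<n. EE (T \<delta>) S i (Rf \<delta>) \<xi>) (\<lambda>\<delta>. \<Sum>i. EE (T \<delta>) S i (Rf \<delta>) \<xi>) sequentially"
    by (rule Weierstrass_m_test[OF _ summable_bound]) (use term_bound[OF _ x] in auto)
  show ?thesis unfolding Hs_def
    by (rule uniform_limit_theorem[OF _ ul]) (auto intro!: always_eventually continuous_intros cont_term)
qed

lemma rho_deriv:
  assumes x: "\<xi> \<in> S"
  shows "((\<lambda>\<delta>. rho1 N w1 w2 b c r \<delta> \<xi>) has_real_derivative Hs 0 \<xi>) (at 0 within {0..})"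
proof -
  let ?rho = "\<lambda>\<delta>. rho1 N w1 w2 b c r \<delta> \<xi>"
  define g where "g z = (if z \<in> {0..d0} then Hs z \<xi> else (?rho z - ?rho 0) / z)" for z
  have r0: "?rho 0 = fm \<xi>" using rho_repr[of 0 \<xi>] d0_pos x by simp
  have eq: "\<forall>z. ?rho z - ?rho 0 = g z * (z - 0)"
  proof
    fix z show "?rho z - ?rho 0 = g z * (z - 0)"
    proof (cases "z \<in> {0..d0}")
      case True then show ?thesis using rho_repr[OF True x] r0 by (simp add: g_def)
    next
      case False
      then have "z \<noteq> 0" using d0_pos by auto
      then show ?thesis using False unfolding g_def by (simp del: atLeastAtMost_iff)
    qed
  qed
  have g0: "g 0 = Hs 0 \<xi>" using d0_pos by (simp add: g_def)
  have "(g \<longlongrightarrow> Hs 0 \<xi>) (at 0 within {0..d0})"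
  proof -
    have "((\<lambda>z. Hs z \<xi>) \<longlongrightarrow> Hs 0 \<xi>) (at 0 within {0..d0})"
      using cont_Hs[OF x] d0_pos unfolding continuous_on_def by auto
    moreover have "eventually (\<lambda>z. Hs z \<xi> = g z) (at 0 within {0..d0})"
      unfolding eventually_at_filter by (auto simp: g_def)
    ultimately show ?thesis by (rule Lim_transform_eventually)
  qed
  then have "(g \<longlongrightarrow> g 0) (at 0 within {0..})"
    using g0 d0_pos by (simp add: at_within_Icc_at_right at_within_Ici_at_right)
  then have "continuous (at 0 within {0..}) g" by (simp add: continuous_within)
  then show ?thesis unfolding DERIV_caratheodory_within using eq g0 by blast
qed

end

definition Lw :: "nat \<Rightarrow> (nat \<Rightarrow> nat \<Rightarrow> real) \<Rightarrow> (nat set \<Rightarrow> real) \<Rightarrow> nat set \<Rightarrow> real" where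
  "Lw N w g X = (\<Sum>a<N. \<Sum>b'<N. (1 / real N) * pmat N w a b' * g (replace X a b'))"

lemma Lw_alt: "Lw N w g X = (1 / real N) * (\<Sum>a<N. \<Sum>b'<N. pmat N w a b' * g (replace X a b'))"
  by (simp add: Lw_def sum_distrib_left mult.assoc)

lemma Lw_add: "Lw N w (\<lambda>Y. g1 Y + g2 Y) X = Lw N w g1 X + Lw N w g2 X"
  by (simp add: Lw_def algebra_simps sum.distrib)
lemma Lw_cmult: "Lw N w (\<lambda>Y. v * g Y) X = v * Lw N w g X"
  by (simp add: Lw_def sum_distrib_left mult_ac)
lemma Lw_sum: "Lw N w (\<lambda>Y. \<Sum>i\<in>I. g i Y) X = (\<Sum>i\<in>I. Lw N w (g i) X)"
proof -
  have "Lw N w (\<lambda>Y. \<Sum>i\<in>I. g i Y) X = (\<Sum>a<N. \<Sum>b'<N. \<Sum>i\<in>I. (1 / real N) * pmat N w a b' * g i (replace X a b'))"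
    by (simp add: Lw_def sum_distrib_left)
  also have "\<dots> = (\<Sum>a<N. \<Sum>i\<in>I. \<Sum>b'<N. (1 / real N) * pmat N w a b' * g i (replace X a b'))"
    by (rule sum.cong[OF refl], rule sum.swap)
  also have "\<dots> = (\<Sum>i\<in>I. \<Sum>a<N. \<Sum>b'<N. (1 / real N) * pmat N w a b' * g i (replace X a b'))"
    by (rule sum.swap)
  finally show ?thesis by (simp add: Lw_def)
qed

context
  fixes N :: nat and w :: "nat \<Rightarrow> nat \<Rightarrow> real"
  assumes V: "valid_layer N w" and Np: "N > 0"
begin

lemma Lw_const: "Lw N w (\<lambda>_. v) X = v"
proof -
  have "Lw N w (\<lambda>_. v) X = (1 / real N) * (\<Sum>a<N. (\<Sum>b'<N. pmat N w a b') * v)"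
    by (simp add: Lw_alt sum_distrib_right)
  also have "\<dots> = v" using Np by (simp add: pmat_rowsum[OF V])
  finally show ?thesis .
qed

lemma Lw_ind:
  assumes i: "i < N"
  shows "Lw N w (\<lambda>Y. ind Y i) X = (1 - 1 / real N) * ind X i + (1 / real N) * (\<Sum>b'<N. pmat N w i b' * ind X b')"
proof -
  have pt: "(\<Sum>b'<N. pmat N w a b' * ind (replace X a b') i)
      = ind X i + (if a = i then (\<Sum>b'<N. pmat N w i b' * ind X b') - ind X i else 0)" if a: "a < N" for a
  proof (cases "a = i")
    case True then show ?thesis by (simp add: ind_replace)
  next
    case False
    then have "(\<Sum>b'<N. pmat N w a b' * ind (replace X a b') i) = (\<Sum>b'<N. pmat N w a b') * ind X i"
      by (simp add: ind_replace sum_distrib_right)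
    then show ?thesis using False pmat_rowsum[OF V a] by simp
  qed
  have "Lw N w (\<lambda>Y. ind Y i) X = (1 / real N) * (\<Sum>a<N. ind X i + (if a = i then (\<Sum>b'<N. pmat N w i b' * ind X b') - ind X i else 0))"
    by (simp add: Lw_alt pt)
  also have "\<dots> = (1 / real N) * (real N * ind X i + ((\<Sum>b'<N. pmat N w i b' * ind X b') - ind X i))"
    using i by (simp add: sum.distrib)
  also have "\<dots> = (1 - 1 / real N) * ind X i + (1 / real N) * (\<Sum>b'<N. pmat N w i b' * ind X b')"
    using Np by (simp add: field_simps)
  finally show ?thesis .
qed

lemma Lw_ind2:
  assumes i: "i < N" and j: "j < N" and ij: "i \<noteq> j"
  shows "Lw N w (\<lambda>Y. ind Y i * ind Y j) X = (1 - 2 / real N) * (ind X i * ind X j)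
      + (1 / real N) * ((\<Sum>b'<N. pmat N w i b' * (ind X b' * ind X j)) + (\<Sum>b'<N. pmat N w j b' * (ind X i * ind X b')))"
proof -
  let ?A = "\<Sum>b'<N. pmat N w i b' * (ind X b' * ind X j)"
  let ?B = "\<Sum>b'<N. pmat N w j b' * (ind X i * ind X b')"
  have pt: "(\<Sum>b'<N. pmat N w a b' * (ind (replace X a b') i * ind (replace X a b') j))
      = ind X i * ind X j + (if a = i then ?A - ind X i * ind X j else 0) + (if a = j then ?B - ind X i * ind X j else 0)"
    if a: "a < N" for a
  proof (cases "a = i")
    case True then show ?thesis using ij by (simp add: ind_replace)
  next
    case False
    show ?thesis
    proof (cases "a = j")
      case True then show ?thesis using False by (simp add: ind_replace)
    next
      case F2: False
      then have "(\<Sum>b'<N. pmat N w a b' * (ind (replace X a b') i * ind (replace X a b') j)) = (\<Sum>b'<N. pmat N w a b') * (ind X i * ind X j)"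
        using False by (simp add: ind_replace sum_distrib_right)
      then show ?thesis using False F2 pmat_rowsum[OF V a] by simp
    qed
  qed
  have "Lw N w (\<lambda>Y. ind Y i * ind Y j) X = (1 / real N) * (\<Sum>a<N. ind X i * ind X j + (if a = i then ?A - ind X i * ind X j else 0) + (if a = j then ?B - ind X i * ind X j else 0))"
    by (simp add: Lw_alt pt)
  also have "\<dots> = (1 / real N) * (real N * (ind X i * ind X j) + (?A - ind X i * ind X j) + (?B - ind X i * ind X j))"
    using i j by (simp add: sum.distrib)
  also have "\<dots> = (1 - 2 / real N) * (ind X i * ind X j) + (1 / real N) * (?A + ?B)"
    using Np by (simp add: field_simps)
  finally show ?thesis .
qed

lemma Lw_mean: "Lw N w (meanstate N w) X = meanstate N w X"
proof -
  have e: "meanstate N w = (\<lambda>Y. \<Sum>i<N. statdist N w i * ind Y i)"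
    by (rule ext) (simp add: meanstate_def)
  have "Lw N w (meanstate N w) X = Lw N w (\<lambda>Y. \<Sum>i<N. statdist N w i * ind Y i) X"
    by (simp only: e)
  also have "\<dots> = (\<Sum>i<N. statdist N w i * Lw N w (\<lambda>Y. ind Y i) X)"
    by (simp add: Lw_sum Lw_cmult)
  also have "\<dots> = (\<Sum>i<N. statdist N w i * ((1 - 1 / real N) * ind X i + (1 / real N) * (\<Sum>b'<N. pmat N w i b' * ind X b')))"
    by (simp add: Lw_ind)
  also have "\<dots> = (1 - 1 / real N) * (\<Sum>i<N. statdist N w i * ind X i) + (1 / real N) * (\<Sum>i<N. statdist N w i * (\<Sum>b'<N. pmat N w i b' * ind X b'))"
  proof -
    have "(\<Sum>i<N. statdist N w i * ((1 - 1 / real N) * ind X i + (1 / real N) * (\<Sum>b'<N. pmat N w i b' * ind X b')))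
       = (\<Sum>i<N. (1 - 1 / real N) * (statdist N w i * ind X i) + (1 / real N) * (statdist N w i * (\<Sum>b'<N. pmat N w i b' * ind X b')))"
      by (rule sum.cong[OF refl]) (simp only: distrib_left mult.left_commute)
    then show ?thesis by (simp only: sum.distrib sum_distrib_left[symmetric])
  qed
  also have "(\<Sum>i<N. statdist N w i * (\<Sum>b'<N. pmat N w i b' * ind X b')) = (\<Sum>b'<N. (\<Sum>i<N. statdist N w i * pmat N w i b') * ind X b')"
    by (simp add: sum_distrib_left sum_distrib_right mult.assoc) (rule sum.swap)
  also have "\<dots> = (\<Sum>b'<N. statdist N w b' * ind X b')" by (simp add: stat[OF V])
  finally show ?thesis by (simp add: e algebra_simps)
qed

end

context model begin

lemma Fe0: "Fe 0 x = (\<lambda>_. 1)" by (rule ext) (simp add: fecundity_def)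
lemma ep0: "ep N w (Fe 0 x) a b' = pmat N w a b'"
  by (simp add: Fe0 ep_def pmat_def strength_def)
lemma d00: "(0::real) \<in> {0..d0}" using d0_pos by simp

lemma EE0_fst: "x \<in> S \<Longrightarrow> EE (T 0) S 1 (\<lambda>y. g (fst y)) x = Lw N w1 g (fst x)"
  using EE_fst[OF _ d00, of x g] by (simp add: ep0 Lw_def)

lemma EE0_prod: "x \<in> S \<Longrightarrow> EE (T 0) S 1 (\<lambda>y. g1 (fst y) * g2 (snd y)) x = Lw N w1 g1 (fst x) * Lw N w2 g2 (snd x)"
proof -
  assume x: "x \<in> S"
  have "EE (T 0) S 1 (\<lambda>y. g1 (fst y) * g2 (snd y)) x
    = (\<Sum>a<N. \<Sum>b'<N. (1 / real N) * pmat N w1 a b' * (\<Sum>a2<N. \<Sum>b2<N. (1 / real N) * pmat N w2 a2 b2 * (g1 (replace (fst x) a b') * g2 (replace (snd x) a2 b2))))"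
    by (simp only: master[OF x] ep0 fst_conv snd_conv)
  also have "\<dots> = (\<Sum>a<N. \<Sum>b'<N. (1 / real N) * pmat N w1 a b' * g1 (replace (fst x) a b') * Lw N w2 g2 (snd x))"
    by (simp add: Lw_def sum_distrib_left mult_ac)
  also have "\<dots> = Lw N w1 g1 (fst x) * Lw N w2 g2 (snd x)"
    by (simp add: Lw_def sum_distrib_right)
  finally show ?thesis .
qed

lemma EE0_invariant:
  assumes h: "\<And>y. y \<in> S \<Longrightarrow> EE (T 0) S 1 h y = h y" and x: "x \<in> S"
  shows "EE (T 0) S t h x = h x"
proof (induction t)
  case 0 then show ?case by (simp add: EE_0[OF finS x])
next
  case (Suc t)
  have "EE (T 0) S (Suc t) h x = EE (T 0) S t (EE (T 0) S 1 h) x" by (rule EE_Suc_last[OF finS x])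
  also have "\<dots> = EE (T 0) S t h x" by (rule EE_cong) (rule h)
  finally show ?case using Suc by simp
qed

abbreviation "f2 y \<equiv> meanstate N w2 (snd y)"

lemma mart1: "x \<in> S \<Longrightarrow> EE (T 0) S t fm x = fm x"
proof (rule EE0_invariant)
  fix y assume y: "y \<in> S"
  show "EE (T 0) S 1 fm y = fm y" using EE0_fst[OF y, of "meanstate N w1"] Lw_mean[OF V1 Npos] by simp
qed

lemma mart12: "x \<in> S \<Longrightarrow> EE (T 0) S t (\<lambda>y. fm y * f2 y) x = fm x * f2 x"
proof (rule EE0_invariant)
  fix y assume y: "y \<in> S"
  show "EE (T 0) S 1 (\<lambda>y. fm y * f2 y) y = fm y * f2 y"
    using EE0_prod[OF y, of "meanstate N w1" "meanstate N w2"] Lw_mean[OF V1 Npos] Lw_mean[OF V2 Npos] by simp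
qed

end

locale mx = model +
  fixes xi :: "nat set \<times> nat set"
  assumes xiS: "xi \<in> states N"
begin

abbreviation "X1 \<equiv> fst xi"
abbreviation "X2 \<equiv> snd xi"
abbreviation "m1 \<equiv> meanstate N w1 X1"
abbreviation "m2 \<equiv> meanstate N w2 X2"
abbreviation "p1 \<equiv> pmat N w1"
abbreviation "p2 \<equiv> pmat N w2"
abbreviation "\<pi>1 \<equiv> statdist N w1"

definition "qf k l y = ind (fst y) k * ind (fst y) l"
definition "aa t k l = EE (T 0) S t (qf k l) xi - m1"
definition "bet k l = (if k < N \<and> l < N then (\<Sum>t. aa t k l) else 0)"

lemma st0: "stoch (T 0) S" by (rule stochT[OF d00])
lemma NR: "real N \<noteq> 0" using Npos by simp

lemma qf_fm: "k < N \<Longrightarrow> l < N \<Longrightarrow> \<bar>qf k l y - fm y\<bar> \<le> mix fst N y"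
proof -
  assume k: "k < N" and l: "l < N"
  have b: "0 \<le> fm y" "fm y \<le> 1" using meanstate_bounds[OF V1 Npos] by auto
  have q: "0 \<le> qf k l y" "qf k l y \<le> 1" unfolding qf_def using ind01 by (auto intro: mult_le_one)
  show ?thesis
  proof (cases "fst y = {..<N}")
    case True then show ?thesis using meanstate_all[OF V1 Npos] k l by (simp add: qf_def mix_def ind_def)
  next
    case False
    show ?thesis
    proof (cases "fst y = {}")
      case True then show ?thesis by (simp add: qf_def mix_def ind_def meanstate_empty)
    next
      case F2: False then show ?thesis using False b q by (simp add: mix_def abs_le_iff)
    qed
  qed
qed

lemma aa_eq: "aa t k l = EE (T 0) S t (\<lambda>y. qf k l y - fm y) xi"
  using mart1[OF xiS, of t] by (simp add: aa_def EE_diff)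

lemma aa_bound: "k < N \<Longrightarrow> l < N \<Longrightarrow> \<bar>aa t k l\<bar> \<le> qq ^ (t div N)"
proof -
  assume k: "k < N" and l: "l < N"
  have "\<bar>aa t k l\<bar> \<le> EE (T 0) S t (\<lambda>y. \<bar>qf k l y - fm y\<bar>) xi" unfolding aa_eq by (rule EE_abs[OF st0 xiS])
  also have "\<dots> \<le> EE (T 0) S t (mix fst N) xi" by (rule EE_mono[OF st0 xiS qf_fm[OF k l]])
  also have "\<dots> \<le> qq ^ (t div N)" by (rule absorb_fst[OF d00 xiS])
  finally show ?thesis .
qed

lemma aa_sums: "k < N \<Longrightarrow> l < N \<Longrightarrow> (\<lambda>t. aa t k l) sums bet k l"
proof -
  assume k: "k < N" and l: "l < N"
  have "summable (\<lambda>t. aa t k l)"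
    by (rule summable_comparison_test[OF _ summable_qq]) (use aa_bound[OF k l] in auto)
  then show ?thesis using k l by (simp add: bet_def summable_sums)
qed

lemma E1_qf_off:
  assumes k: "k < N" and l: "l < N" and kl: "k \<noteq> l" and y: "y \<in> S"
  shows "EE (T 0) S 1 (qf k l) y = (1 - 2 / real N) * qf k l y
       + (1 / real N) * ((\<Sum>b'<N. p1 k b' * qf b' l y) + (\<Sum>b'<N. p1 l b' * qf k b' y))"
proof -
  have "EE (T 0) S 1 (qf k l) y = Lw N w1 (\<lambda>Y. ind Y k * ind Y l) (fst y)"
    using EE0_fst[OF y, of "\<lambda>Y. ind Y k * ind Y l"] by (simp add: qf_def[abs_def])
  also have "\<dots> = (1 - 2 / real N) * qf k l y
       + (1 / real N) * ((\<Sum>b'<N. p1 k b' * qf b' l y) + (\<Sum>b'<N. p1 l b' * qf k b' y))"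
    by (simp add: Lw_ind2[OF V1 Npos k l kl] qf_def)
  finally show ?thesis .
qed

lemma E1_qf_diag:
  assumes k: "k < N" and y: "y \<in> S"
  shows "EE (T 0) S 1 (qf k k) y = (1 - 1 / real N) * qf k k y + (1 / real N) * (\<Sum>b'<N. p1 k b' * qf b' b' y)"
proof -
  have "EE (T 0) S 1 (qf k k) y = Lw N w1 (\<lambda>Y. ind Y k) (fst y)"
    using EE0_fst[OF y, of "\<lambda>Y. ind Y k"] by (simp add: qf_def[abs_def] ind01)
  also have "\<dots> = (1 - 1 / real N) * qf k k y + (1 / real N) * (\<Sum>b'<N. p1 k b' * qf b' b' y)"
    by (simp add: Lw_ind[OF V1 Npos k] qf_def ind01)
  finally show ?thesis .
qed

lemma psum_shift: "k < N \<Longrightarrow> (\<Sum>b'<N. p1 k b' * (A b' + m)) = (\<Sum>b'<N. p1 k b' * A b') + m"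
  using pmat_rowsum[OF V1, of k] by (simp add: distrib_left sum.distrib sum_distrib_right[symmetric])

lemma aa_rec_off:
  assumes k: "k < N" and l: "l < N" and kl: "k \<noteq> l"
  shows "aa (Suc t) k l = (1 - 2 / real N) * aa t k l
       + (1 / real N) * ((\<Sum>b'<N. p1 k b' * aa t b' l) + (\<Sum>b'<N. p1 l b' * aa t k b'))"
proof -
  let ?E = "\<lambda>k l. EE (T 0) S t (qf k l) xi"
  have "EE (T 0) S (Suc t) (qf k l) xi = EE (T 0) S t (EE (T 0) S 1 (qf k l)) xi"
    by (rule EE_Suc_last[OF finS xiS])
  also have "\<dots> = EE (T 0) S t (\<lambda>y. (1 - 2 / real N) * qf k l y
       + (1 / real N) * ((\<Sum>b'<N. p1 k b' * qf b' l y) + (\<Sum>b'<N. p1 l b' * qf k b' y))) xi"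
    by (rule EE_cong) (rule E1_qf_off[OF k l kl])
  also have "\<dots> = (1 - 2 / real N) * ?E k l + (1 / real N) * ((\<Sum>b'<N. p1 k b' * ?E b' l) + (\<Sum>b'<N. p1 l b' * ?E k b'))"
    by (simp only: EE_add_fun EE_cmult EE_sum)
  finally have e: "EE (T 0) S (Suc t) (qf k l) xi = \<dots>" .
  have "?E b' l = aa t b' l + m1" "?E k b' = aa t k b' + m1" for b' by (simp_all add: aa_def)
  then have "EE (T 0) S (Suc t) (qf k l) xi = (1 - 2 / real N) * (aa t k l + m1)
       + (1 / real N) * ((\<Sum>b'<N. p1 k b' * (aa t b' l + m1)) + (\<Sum>b'<N. p1 l b' * (aa t k b' + m1)))"
    using e by simp
  also have "\<dots> = (1 - 2 / real N) * (aa t k l + m1)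
       + (1 / real N) * ((\<Sum>b'<N. p1 k b' * aa t b' l) + m1 + ((\<Sum>b'<N. p1 l b' * aa t k b') + m1))"
    by (simp only: psum_shift[OF k] psum_shift[OF l])
  finally show ?thesis unfolding aa_def[of "Suc t"] by (simp add: algebra_simps)
qed

lemma aa_rec_diag:
  assumes k: "k < N"
  shows "aa (Suc t) k k = (1 - 1 / real N) * aa t k k + (1 / real N) * (\<Sum>b'<N. p1 k b' * aa t b' b')"
proof -
  let ?E = "\<lambda>k l. EE (T 0) S t (qf k l) xi"
  have "EE (T 0) S (Suc t) (qf k k) xi = EE (T 0) S t (EE (T 0) S 1 (qf k k)) xi"
    by (rule EE_Suc_last[OF finS xiS])
  also have "\<dots> = EE (T 0) S t (\<lambda>y. (1 - 1 / real N) * qf k k y + (1 / real N) * (\<Sum>b'<N. p1 k b' * qf b' b' y)) xi"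
    by (rule EE_cong) (rule E1_qf_diag[OF k])
  also have "\<dots> = (1 - 1 / real N) * ?E k k + (1 / real N) * (\<Sum>b'<N. p1 k b' * ?E b' b')"
    by (simp only: EE_add_fun EE_cmult EE_sum)
  finally have e: "EE (T 0) S (Suc t) (qf k k) xi = \<dots>" .
  have "?E b' b' = aa t b' b' + m1" for b' by (simp_all add: aa_def)
  then have "EE (T 0) S (Suc t) (qf k k) xi = (1 - 1 / real N) * (aa t k k + m1) + (1 / real N) * (\<Sum>b'<N. p1 k b' * (aa t b' b' + m1))"
    using e by simp
  also have "\<dots> = (1 - 1 / real N) * (aa t k k + m1) + (1 / real N) * ((\<Sum>b'<N. p1 k b' * aa t b' b') + m1)"
    by (simp only: psum_shift[OF k])
  finally show ?thesis unfolding aa_def[of "Suc t"] by (simp add: algebra_simps)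
qed

lemma bet_off:
  assumes k: "k < N" and l: "l < N" and kl: "k \<noteq> l"
  shows "bet k l = real N / 2 * (ind X1 k * ind X1 l - m1) + 1/2 * (\<Sum>b'<N. p1 k b' * bet b' l) + 1/2 * (\<Sum>b'<N. p1 l b' * bet k b')"
proof -
  have s1: "(\<lambda>t. aa (Suc t) k l) sums (bet k l - aa 0 k l)"
    using aa_sums[OF k l] sums_Suc_iff[of "\<lambda>t. aa t k l" "bet k l - aa 0 k l"] by simp
  have s2: "(\<lambda>t. aa (Suc t) k l) sums ((1 - 2 / real N) * bet k l
       + (1 / real N) * ((\<Sum>b'<N. p1 k b' * bet b' l) + (\<Sum>b'<N. p1 l b' * bet k b')))"
    unfolding aa_rec_off[OF k l kl]
    by (intro sums_add sums_mult sums_sum aa_sums) (use k l in auto)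
  have "bet k l - aa 0 k l = (1 - 2 / real N) * bet k l
       + (1 / real N) * ((\<Sum>b'<N. p1 k b' * bet b' l) + (\<Sum>b'<N. p1 l b' * bet k b'))"
    using sums_unique2[OF s1 s2] .
  moreover have "aa 0 k l = ind X1 k * ind X1 l - m1" by (simp add: aa_def EE_0[OF finS xiS] qf_def)
  ultimately have "(2 / real N) * bet k l = (ind X1 k * ind X1 l - m1) + (1 / real N) * ((\<Sum>b'<N. p1 k b' * bet b' l) + (\<Sum>b'<N. p1 l b' * bet k b'))"
    by (simp add: algebra_simps)
  then have "(real N / 2) * ((2 / real N) * bet k l) = (real N / 2) * ((ind X1 k * ind X1 l - m1) + (1 / real N) * ((\<Sum>b'<N. p1 k b' * bet b' l) + (\<Sum>b'<N. p1 l b' * bet k b')))"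
    by simp
  then show ?thesis using NR by (simp add: algebra_simps)
qed

lemma bet_diag:
  assumes k: "k < N"
  shows "bet k k = real N * (ind X1 k - m1) + (\<Sum>b'<N. p1 k b' * bet b' b')"
proof -
  have s1: "(\<lambda>t. aa (Suc t) k k) sums (bet k k - aa 0 k k)"
    using aa_sums[OF k k] sums_Suc_iff[of "\<lambda>t. aa t k k" "bet k k - aa 0 k k"] by simp
  have s2: "(\<lambda>t. aa (Suc t) k k) sums ((1 - 1 / real N) * bet k k + (1 / real N) * (\<Sum>b'<N. p1 k b' * bet b' b'))"
    unfolding aa_rec_diag[OF k]
    by (intro sums_add sums_mult sums_sum aa_sums) (use k in auto)
  have "bet k k - aa 0 k k = (1 - 1 / real N) * bet k k + (1 / real N) * (\<Sum>b'<N. p1 k b' * bet b' b')"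
    using sums_unique2[OF s1 s2] .
  moreover have "aa 0 k k = ind X1 k - m1" by (simp add: aa_def EE_0[OF finS xiS] qf_def ind01)
  ultimately have "(1 / real N) * bet k k = (ind X1 k - m1) + (1 / real N) * (\<Sum>b'<N. p1 k b' * bet b' b')"
    by (simp add: algebra_simps)
  then have "real N * ((1 / real N) * bet k k) = real N * ((ind X1 k - m1) + (1 / real N) * (\<Sum>b'<N. p1 k b' * bet b' b'))"
    by simp
  then show ?thesis using NR by (simp add: algebra_simps)
qed

lemma bet_norm: "(\<Sum>k<N. \<pi>1 k * bet k k) = 0"
proof -
  have s: "(\<lambda>t. \<Sum>k<N. \<pi>1 k * aa t k k) sums (\<Sum>k<N. \<pi>1 k * bet k k)"
    by (intro sums_sum sums_mult aa_sums) auto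
  have z: "(\<Sum>k<N. \<pi>1 k * aa t k k) = 0" for t
  proof -
    have "(\<Sum>k<N. \<pi>1 k * aa t k k) = (\<Sum>k<N. \<pi>1 k * EE (T 0) S t (qf k k) xi) - (\<Sum>k<N. \<pi>1 k) * m1"
      by (simp add: aa_def right_diff_distrib sum_subtractf sum_distrib_right)
    also have "(\<Sum>k<N. \<pi>1 k * EE (T 0) S t (qf k k) xi) = EE (T 0) S t (\<lambda>y. \<Sum>k<N. \<pi>1 k * qf k k y) xi"
      by (simp only: EE_sum EE_cmult)
    also have "(\<lambda>y. \<Sum>k<N. \<pi>1 k * qf k k y) = fm" by (rule ext) (simp add: qf_def ind01 meanstate_def)
    finally show ?thesis using mart1[OF xiS] statdist_sum[OF V1 Npos] by simp
  qed
  have "(\<lambda>t. 0::real) sums (\<Sum>k<N. \<pi>1 k * bet k k)" using s unfolding z .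
  then show ?thesis using sums_unique2[OF _ sums_zero] by blast
qed

lemma is_beta_bet: "is_beta N w1 X1 bet"
  unfolding is_beta_def
  using bet_off bet_diag bet_norm by (auto simp: bet_def[of i j for i j] meanstate_def)

end

lemma aux_solve:
  fixes G K al be ga c0 A C E D :: real
  assumes h1: "(1 - al) * G = c0 + be * A + ga * C" and h2: "K * (1 - al) = 1" and h3: "K * be = E" and h4: "K * ga = D"
  shows "G = K * c0 + D * C + E * A"
proof -
  have "G = (K * (1 - al)) * G" using h2 by simp
  also have "\<dots> = K * ((1 - al) * G)" by (simp only: mult.assoc)
  also have "\<dots> = K * (c0 + be * A + ga * C)" using h1 by simp
  also have "\<dots> = K * c0 + (K * be) * A + (K * ga) * C" by (simp add: algebra_simps)
  finally show ?thesis using h3 h4 by simp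
qed

lemma aux_shift:
  fixes G K a D CC E A1 A2 C :: real
  assumes "G = K * a + D * CC + E * (A1 + A2)" "D = 1 - E * 2"
  shows "G - C = K * a + D * (CC + - C) + E * ((A1 + - C) + (A2 + - C))"
  using assms(1) unfolding assms(2) by (simp add: algebra_simps)

context mx begin

definition "qc k l y = ind (fst y) k * ind (snd y) l"
definition "cc t k l = EE (T 0) S t (qc k l) xi - m1 * m2"
definition "Gs k l = (\<Sum>t. cc t k l)"
definition "C0 = (\<Sum>i<N. \<pi>1 i * Gs i i)"
definition "gam k l = (if k < N \<and> l < N then Gs k l - C0 else 0)"

lemma qc_bound: "k < N \<Longrightarrow> l < N \<Longrightarrow> \<bar>qc k l y - fm y * f2 y\<bar> \<le> mix fst N y + mix snd N y"
proof -
  assume k: "k < N" and l: "l < N"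
  have b1: "0 \<le> fm y" "fm y \<le> 1" using meanstate_bounds[OF V1 Npos] by auto
  have b2: "0 \<le> f2 y" "f2 y \<le> 1" using meanstate_bounds[OF V2 Npos] by auto
  have q: "0 \<le> qc k l y" "qc k l y \<le> 1" unfolding qc_def using ind01 by (auto intro: mult_le_one)
  have p: "0 \<le> fm y * f2 y" "fm y * f2 y \<le> 1" using b1 b2 by (auto intro: mult_le_one)
  have m: "0 \<le> mix fst N y" "0 \<le> mix snd N y" by (auto simp: mix_def)
  have i1: "ind (fst y) k = fm y" if h1: "fst y = {} \<or> fst y = {..<N}"
  proof (cases "fst y = {}")
    case True then show ?thesis by (simp add: ind_def meanstate_empty)
  next
    case False then have "fst y = {..<N}" using h1 by blast
    then show ?thesis using k meanstate_all[OF V1 Npos] by (simp add: ind_def)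
  qed
  have i2: "ind (snd y) l = f2 y" if h2: "snd y = {} \<or> snd y = {..<N}"
  proof (cases "snd y = {}")
    case True then show ?thesis by (simp add: ind_def meanstate_empty)
  next
    case False then have "snd y = {..<N}" using h2 by blast
    then show ?thesis using l meanstate_all[OF V2 Npos] by (simp add: ind_def)
  qed
  show ?thesis
  proof (cases "(fst y = {} \<or> fst y = {..<N}) \<and> (snd y = {} \<or> snd y = {..<N})")
    case True
    then have "qc k l y - fm y * f2 y = 0" using i1 i2 by (simp add: qc_def)
    then show ?thesis using m by simp
  next
    case False
    then have "mix fst N y = 1 \<or> mix snd N y = 1" unfolding mix_def by auto
    then have "1 \<le> mix fst N y + mix snd N y" using m by auto
    moreover have "\<bar>qc k l y - fm y * f2 y\<bar> \<le> 1" using q p by (simp add: abs_le_iff)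
    ultimately show ?thesis by linarith
  qed
qed

lemma cc_bound: "k < N \<Longrightarrow> l < N \<Longrightarrow> \<bar>cc t k l\<bar> \<le> 2 * qq ^ (t div N)"
proof -
  assume k: "k < N" and l: "l < N"
  have e: "cc t k l = EE (T 0) S t (\<lambda>y. qc k l y - fm y * f2 y) xi"
    using mart12[OF xiS, of t] by (simp add: cc_def EE_diff)
  have "\<bar>cc t k l\<bar> \<le> EE (T 0) S t (\<lambda>y. \<bar>qc k l y - fm y * f2 y\<bar>) xi" unfolding e by (rule EE_abs[OF st0 xiS])
  also have "\<dots> \<le> EE (T 0) S t (\<lambda>y. mix fst N y + mix snd N y) xi" by (rule EE_mono[OF st0 xiS qc_bound[OF k l]])
  also have "\<dots> = EE (T 0) S t (mix fst N) xi + EE (T 0) S t (mix snd N) xi" by (rule EE_add_fun)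
  also have "\<dots> \<le> 2 * qq ^ (t div N)" using absorb_fst[OF d00 xiS, of t] absorb_snd[OF d00 xiS, of t] by simp
  finally show ?thesis .
qed

lemma cc_sums: "k < N \<Longrightarrow> l < N \<Longrightarrow> (\<lambda>t. cc t k l) sums Gs k l"
proof -
  assume k: "k < N" and l: "l < N"
  have "summable (\<lambda>t. cc t k l)"
    by (rule summable_comparison_test[OF _ summable_mult[OF summable_qq, of 2]]) (use cc_bound[OF k l] in auto)
  then show ?thesis by (simp add: Gs_def summable_sums)
qed

definition "al = (1 - 1 / real N) * (1 - 1 / real N)"
definition "be = (1 - 1 / real N) * (1 / real N)"
definition "ga = (1 / real N) * (1 / real N)"

lemma coef_sum: "al + 2 * be + ga = 1"
  unfolding al_def be_def ga_def using NR by (simp add: field_simps)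

lemma E1_qc:
  assumes k: "k < N" and l: "l < N" and y: "y \<in> S"
  shows "EE (T 0) S 1 (qc k l) y = al * qc k l y + be * ((\<Sum>b'<N. p1 k b' * qc b' l y) + (\<Sum>b'<N. p2 l b' * qc k b' y))
      + ga * (\<Sum>b'<N. \<Sum>b2<N. p1 k b' * p2 l b2 * qc b' b2 y)"
proof -
  let ?x = "ind (fst y)" and ?z = "ind (snd y)"
  have "EE (T 0) S 1 (qc k l) y = Lw N w1 (\<lambda>Y. ind Y k) (fst y) * Lw N w2 (\<lambda>Y. ind Y l) (snd y)"
    using EE0_prod[OF y, of "\<lambda>Y. ind Y k" "\<lambda>Y. ind Y l"] by (simp add: qc_def[abs_def])
  also have "\<dots> = ((1 - 1 / real N) * ?x k + (1 / real N) * (\<Sum>b'<N. p1 k b' * ?x b'))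
                 * ((1 - 1 / real N) * ?z l + (1 / real N) * (\<Sum>b'<N. p2 l b' * ?z b'))"
    by (simp add: Lw_ind[OF V1 Npos k] Lw_ind[OF V2 Npos l])
  also have "\<dots> = al * (?x k * ?z l) + be * ((\<Sum>b'<N. p1 k b' * ?x b') * ?z l + ?x k * (\<Sum>b'<N. p2 l b' * ?z b'))
      + ga * ((\<Sum>b'<N. p1 k b' * ?x b') * (\<Sum>b2<N. p2 l b2 * ?z b2))"
    unfolding al_def be_def ga_def by (simp add: algebra_simps)
  also have "(\<Sum>b'<N. p1 k b' * ?x b') * ?z l = (\<Sum>b'<N. p1 k b' * qc b' l y)"
    by (simp add: qc_def sum_distrib_right mult.assoc)
  also have "?x k * (\<Sum>b'<N. p2 l b' * ?z b') = (\<Sum>b'<N. p2 l b' * qc k b' y)"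
    by (simp add: qc_def sum_distrib_left mult_ac)
  also have "(\<Sum>b'<N. p1 k b' * ?x b') * (\<Sum>b2<N. p2 l b2 * ?z b2) = (\<Sum>b'<N. \<Sum>b2<N. p1 k b' * p2 l b2 * qc b' b2 y)"
    by (simp add: qc_def sum_distrib_left sum_distrib_right mult_ac) (rule sum.swap)
  finally show ?thesis by (simp only: qc_def[abs_def])
qed

lemma psum_shift2: "j < N \<Longrightarrow> (\<Sum>b'<N. p2 j b' * (A b' + m)) = (\<Sum>b'<N. p2 j b' * A b') + m"
  using pmat_rowsum[OF V2, of j] by (simp add: distrib_left sum.distrib sum_distrib_right[symmetric])

lemma psum_shift12: "k < N \<Longrightarrow> l < N \<Longrightarrow> (\<Sum>b'<N. \<Sum>b2<N. p1 k b' * p2 l b2 * (A b' b2 + m)) = (\<Sum>b'<N. \<Sum>b2<N. p1 k b' * p2 l b2 * A b' b2) + m"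
proof -
  assume k: "k < N" and l: "l < N"
  have "(\<Sum>b'<N. \<Sum>b2<N. p1 k b' * p2 l b2 * (A b' b2 + m)) = (\<Sum>b'<N. p1 k b' * ((\<Sum>b2<N. p2 l b2 * A b' b2) + m))"
  proof (rule sum.cong[OF refl])
    fix b' assume "b' \<in> {..<N}"
    have "(\<Sum>b2<N. p1 k b' * p2 l b2 * (A b' b2 + m)) = p1 k b' * (\<Sum>b2<N. p2 l b2 * (A b' b2 + m))"
      by (simp add: sum_distrib_left mult.assoc)
    then show "(\<Sum>b2<N. p1 k b' * p2 l b2 * (A b' b2 + m)) = p1 k b' * ((\<Sum>b2<N. p2 l b2 * A b' b2) + m)"
      by (simp only: psum_shift2[OF l])
  qed
  also have "\<dots> = (\<Sum>b'<N. p1 k b' * (\<Sum>b2<N. p2 l b2 * A b' b2)) + m" by (rule psum_shift[OF k])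
  finally show ?thesis by (simp add: sum_distrib_left mult_ac)
qed

lemma cc_rec:
  assumes k: "k < N" and l: "l < N"
  shows "cc (Suc t) k l = al * cc t k l + be * ((\<Sum>b'<N. p1 k b' * cc t b' l) + (\<Sum>b'<N. p2 l b' * cc t k b'))
      + ga * (\<Sum>b'<N. \<Sum>b2<N. p1 k b' * p2 l b2 * cc t b' b2)"
proof -
  let ?E = "\<lambda>k l. EE (T 0) S t (qc k l) xi"
  let ?m = "m1 * m2"
  have "EE (T 0) S (Suc t) (qc k l) xi = EE (T 0) S t (EE (T 0) S 1 (qc k l)) xi"
    by (rule EE_Suc_last[OF finS xiS])
  also have "\<dots> = EE (T 0) S t (\<lambda>y. al * qc k l y + be * ((\<Sum>b'<N. p1 k b' * qc b' l y) + (\<Sum>b'<N. p2 l b' * qc k b' y))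
      + ga * (\<Sum>b'<N. \<Sum>b2<N. p1 k b' * p2 l b2 * qc b' b2 y)) xi"
    by (rule EE_cong) (rule E1_qc[OF k l])
  also have "\<dots> = al * ?E k l + be * ((\<Sum>b'<N. p1 k b' * ?E b' l) + (\<Sum>b'<N. p2 l b' * ?E k b'))
      + ga * (\<Sum>b'<N. \<Sum>b2<N. p1 k b' * p2 l b2 * ?E b' b2)"
    by (simp only: EE_add_fun EE_cmult EE_sum)
  also have "\<dots> = al * (cc t k l + ?m) + be * ((\<Sum>b'<N. p1 k b' * (cc t b' l + ?m)) + (\<Sum>b'<N. p2 l b' * (cc t k b' + ?m)))
      + ga * (\<Sum>b'<N. \<Sum>b2<N. p1 k b' * p2 l b2 * (cc t b' b2 + ?m))"
    by (simp add: cc_def)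
  also have "\<dots> = al * (cc t k l + ?m) + be * (((\<Sum>b'<N. p1 k b' * cc t b' l) + ?m) + ((\<Sum>b'<N. p2 l b' * cc t k b') + ?m))
      + ga * ((\<Sum>b'<N. \<Sum>b2<N. p1 k b' * p2 l b2 * cc t b' b2) + ?m)"
    by (simp only: psum_shift[OF k] psum_shift2[OF l] psum_shift12[OF k l])
  finally have e: "EE (T 0) S (Suc t) (qc k l) xi = \<dots>" .
  have cm: "al * (m1 * m2) + (ga * (m1 * m2) + be * (2 * (m1 * m2))) = m1 * m2"
  proof -
    have "(al + 2 * be + ga) * (m1 * m2) = m1 * m2" using coef_sum by simp
    then show ?thesis by (simp add: algebra_simps)
  qed
  show ?thesis unfolding cc_def[of "Suc t"] e using cm
    by (simp add: algebra_simps)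
qed

lemma Gs_eq:
  assumes k: "k < N" and l: "l < N"
  shows "Gs k l = (real N)^2 / (2 * real N - 1) * (ind X1 k * ind X2 l - m1 * m2)
     + 1 / (2 * real N - 1) * (\<Sum>b'<N. \<Sum>b2<N. p1 k b' * p2 l b2 * Gs b' b2)
     + (real N - 1) / (2 * real N - 1) * ((\<Sum>b'<N. p1 k b' * Gs b' l) + (\<Sum>b'<N. p2 l b' * Gs k b'))"
proof -
  let ?A = "(\<Sum>b'<N. p1 k b' * Gs b' l) + (\<Sum>b'<N. p2 l b' * Gs k b')"
  let ?C = "\<Sum>b'<N. \<Sum>b2<N. p1 k b' * p2 l b2 * Gs b' b2"
  have s1: "(\<lambda>t. cc (Suc t) k l) sums (Gs k l - cc 0 k l)"
    using cc_sums[OF k l] sums_Suc_iff[of "\<lambda>t. cc t k l" "Gs k l - cc 0 k l"] by simp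
  have s2: "(\<lambda>t. cc (Suc t) k l) sums (al * Gs k l + be * ?A + ga * ?C)"
    unfolding cc_rec[OF k l]
    by (intro sums_add sums_mult sums_sum cc_sums) (use k l in auto)
  have e: "Gs k l - cc 0 k l = al * Gs k l + be * ?A + ga * ?C" using sums_unique2[OF s1 s2] .
  have c0: "cc 0 k l = ind X1 k * ind X2 l - m1 * m2" by (simp add: cc_def EE_0[OF finS xiS] qc_def)
  have N1: "2 * real N - 1 \<noteq> 0" using N2 by simp
  have h1: "(1 - al) * Gs k l = cc 0 k l + be * ?A + ga * ?C" using e by (simp add: algebra_simps)
  have h2: "(real N)^2 / (2 * real N - 1) * (1 - al) = 1"
    unfolding al_def using NR N1 by (simp add: field_simps power2_eq_square)
  have h3: "(real N)^2 / (2 * real N - 1) * be = (real N - 1) / (2 * real N - 1)"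
    unfolding be_def using NR N1 by (simp add: field_simps power2_eq_square)
  have h4: "(real N)^2 / (2 * real N - 1) * ga = 1 / (2 * real N - 1)"
    unfolding ga_def using NR N1 by (simp add: field_simps power2_eq_square)
  show ?thesis using aux_solve[OF h1 h2 h3 h4] unfolding c0 .
qed

lemma is_gamma_gam: "is_gamma N w1 w2 X1 X2 gam"
proof -
  have N1: "2 * real N - 1 \<noteq> 0" using N2 by simp
  have eq: "gam i j = (real N)^2 / (2 * real N - 1) * (ind X1 i * ind X2 j - m1 * m2)
     + 1 / (2 * real N - 1) * (\<Sum>k1<N. \<Sum>k2<N. p1 i k1 * p2 j k2 * gam k1 k2)
     + (real N - 1) / (2 * real N - 1) * ((\<Sum>k<N. p1 i k * gam k j) + (\<Sum>k<N. p2 j k * gam i k))"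
    if i: "i < N" and j: "j < N" for i j
  proof -
    have g1: "(\<Sum>k1<N. \<Sum>k2<N. p1 i k1 * p2 j k2 * gam k1 k2) = (\<Sum>k1<N. \<Sum>k2<N. p1 i k1 * p2 j k2 * Gs k1 k2) + (- C0)"
      using psum_shift12[OF i j, of "\<lambda>a b. Gs a b" "- C0"] by (simp add: gam_def)
    have g2: "(\<Sum>k<N. p1 i k * gam k j) = (\<Sum>k<N. p1 i k * Gs k j) + (- C0)"
      using psum_shift[OF i, of "\<lambda>a. Gs a j" "- C0"] j by (simp add: gam_def)
    have g3: "(\<Sum>k<N. p2 j k * gam i k) = (\<Sum>k<N. p2 j k * Gs i k) + (- C0)"
      using psum_shift2[OF j, of "\<lambda>a. Gs i a" "- C0"] i by (simp add: gam_def)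
    have c: "1 / (2 * real N - 1) + (real N - 1) / (2 * real N - 1) * 2 = 1"
      using N1 by (simp add: field_simps)
    have c': "1 / (2 * real N - 1) = 1 - (real N - 1) / (2 * real N - 1) * 2" using c by simp
    have "gam i j = Gs i j - C0" using i j by (simp add: gam_def)
    also have "\<dots> = (real N)^2 / (2 * real N - 1) * (ind X1 i * ind X2 j - m1 * m2)
     + 1 / (2 * real N - 1) * ((\<Sum>k1<N. \<Sum>k2<N. p1 i k1 * p2 j k2 * Gs k1 k2) + - C0)
     + (real N - 1) / (2 * real N - 1) * (((\<Sum>k<N. p1 i k * Gs k j) + - C0) + ((\<Sum>k<N. p2 j k * Gs i k) + - C0))"
      by (rule aux_shift[OF Gs_eq[OF i j] c'])
    finally show ?thesis unfolding g1 g2 g3 .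
  qed
  have norm: "(\<Sum>i<N. \<pi>1 i * gam i i) = 0"
  proof -
    have "(\<Sum>i<N. \<pi>1 i * gam i i) = (\<Sum>i<N. \<pi>1 i * Gs i i) - (\<Sum>i<N. \<pi>1 i) * C0"
      by (simp add: gam_def right_diff_distrib sum_subtractf sum_distrib_right)
    then show ?thesis using statdist_sum[OF V1 Npos] by (simp add: C0_def)
  qed
  show ?thesis unfolding is_gamma_def
  proof (intro conjI)
    show "\<forall>i j. \<not> (i < N \<and> j < N) \<longrightarrow> gam i j = 0" by (simp add: gam_def)
  qed (use eq norm in blast)+
qed

end

lemma zero_term: "finite A \<Longrightarrow> (\<And>x. x \<in> A \<Longrightarrow> 0 \<le> f x) \<Longrightarrow> sum f A = (0::real) \<Longrightarrow> b \<in> A \<Longrightarrow> f b = 0"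
  using sum_nonneg_eq_0_iff by blast

context
  fixes N :: nat and w :: "nat \<Rightarrow> nat \<Rightarrow> real"
  assumes V: "valid_layer N w"
begin

lemma path_prop:
  assumes step: "\<And>a b. a < N \<Longrightarrow> b < N \<Longrightarrow> 0 < w a b \<Longrightarrow> Q a \<Longrightarrow> Q b"
    and i0: "i0 < N" "Q i0" and j: "j < N"
  shows "Q j"
proof -
  have "(\<lambda>a b. a < N \<and> b < N \<and> w a b > 0)\<^sup>*\<^sup>* i0 j" using V i0 j by (simp add: valid_layer_def)
  then show ?thesis
  proof (induction rule: rtranclp_induct)
    case base then show ?case using i0 by simp
  next
    case (step y z) then show ?case using assms(1) by blast
  qed
qed

lemma psub: "a < N \<Longrightarrow> (\<Sum>k<N. pmat N w a k * (M - d k)) = M - (\<Sum>k<N. pmat N w a k * d k)"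
  using pmat_rowsum[OF V, of a] by (simp add: right_diff_distrib sum_subtractf sum_distrib_right[symmetric])

lemma max_step:
  assumes a: "a < N" and b: "b < N" and wab: "0 < w a b"
    and le: "\<And>k. k < N \<Longrightarrow> z k \<le> M"
    and zero: "(\<Sum>k<N. pmat N w a k * (M - z k) + g k) = 0"
    and g: "\<And>k. k < N \<Longrightarrow> 0 \<le> g k"
  shows "z b = M"
proof -
  have "pmat N w a b * (M - z b) + g b = 0"
    by (rule zero_term[OF _ _ zero]) (use le g pmat_nonneg[OF V a] b in \<open>auto intro!: add_nonneg_nonneg mult_nonneg_nonneg\<close>)
  moreover have "0 \<le> pmat N w a b * (M - z b)" using le[OF b] pmat_nonneg[OF V a b] by simp
  ultimately have "pmat N w a b * (M - z b) = 0" using g[OF b] by linarith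
  then show ?thesis using pmat_pos[OF V a b wab] by simp
qed

lemma diag_const:
  assumes N: "N > 0" and d: "\<And>i. i < N \<Longrightarrow> d i = (\<Sum>k<N. pmat N w i k * d k)"
  shows "\<exists>M. \<forall>j<N. d j = M"
proof -
  define M where "M = Max (d ` {..<N})"
  have le: "d k \<le> M" if "k < N" for k unfolding M_def using that by (intro Max_ge) auto
  have "M \<in> d ` {..<N}" unfolding M_def by (rule Max_in) (use N in auto)
  then obtain i0 where i0: "i0 < N" "d i0 = M" by auto
  have "d j = M" if j: "j < N" for j
  proof (rule path_prop[where Q="\<lambda>a. d a = M", OF _ i0 j])
    fix a b assume a: "a < N" and b: "b < N" and wab: "0 < w a b" and da: "d a = M"
    show "d b = M"
    proof (rule max_step[OF a b wab le, where g="\<lambda>_. 0"])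
      show "(\<Sum>k<N. pmat N w a k * (M - d k) + 0) = 0" using psub[OF a, of M d] d[OF a] da by simp
    qed auto
  qed
  then show ?thesis by blast
qed

lemma off_nonpos:
  assumes N: "N > 0" and dz: "\<And>k. k < N \<Longrightarrow> e k k = 0"
    and off: "\<And>i j. i < N \<Longrightarrow> j < N \<Longrightarrow> i \<noteq> j \<Longrightarrow>
        e i j = 1/2 * (\<Sum>k<N. pmat N w i k * e k j) + 1/2 * (\<Sum>k<N. pmat N w j k * e i k)"
    and i: "i < N" and j: "j < N"
  shows "e i j \<le> 0"
proof (rule ccontr)
  assume neg: "\<not> e i j \<le> 0"
  define A where "A = {..<N} \<times> {..<N}"
  define M where "M = Max ((\<lambda>(a, b). e a b) ` A)"
  have finA: "finite A" "A \<noteq> {}" using N by (auto simp: A_def)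
  have le: "e a b \<le> M" if "a < N" "b < N" for a b
    unfolding M_def using that finA by (intro Max_ge) (auto simp: A_def)
  have "M \<in> (\<lambda>(a, b). e a b) ` A" unfolding M_def by (rule Max_in) (use finA in auto)
  then obtain i0 j0 where ij0: "i0 < N" "j0 < N" "e i0 j0 = M" by (auto simp: A_def)
  have Mpos: "M > 0" using le[OF i j] neg by simp
  have "e j0 j0 = M"
  proof (rule path_prop[where Q="\<lambda>a. e a j0 = M", OF _ ij0(1,3) ij0(2)])
    fix a b assume a: "a < N" and b: "b < N" and wab: "0 < w a b" and ea: "e a j0 = M"
    have aj: "a \<noteq> j0" using ea dz[OF ij0(2)] Mpos by auto
    show "e b j0 = M"
    proof (rule max_step[OF a b wab, where z="\<lambda>k. e k j0" and M=M and g="\<lambda>k. pmat N w j0 k * (M - e a k)"])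
      show "e k j0 \<le> M" if "k < N" for k using le that ij0 by simp
      show "0 \<le> pmat N w j0 k * (M - e a k)" if "k < N" for k
        using le[OF a that] pmat_nonneg[OF V ij0(2) that] by simp
      have "(\<Sum>k<N. pmat N w a k * (M - e k j0) + pmat N w j0 k * (M - e a k))
          = (M - (\<Sum>k<N. pmat N w a k * e k j0)) + (M - (\<Sum>k<N. pmat N w j0 k * e a k))"
        by (simp add: sum.distrib psub[OF a] psub[OF ij0(2)])
      also have "\<dots> = 0" using off[OF a ij0(2) aj] ea by simp
      finally show "(\<Sum>k<N. pmat N w a k * (M - e k j0) + pmat N w j0 k * (M - e a k)) = 0" .
    qed
  qed
  then show False using dz[OF ij0(2)] Mpos by simp
qed

lemma beta_unique:
  assumes N: "N > 0" and b1: "is_beta N w X \<beta>1" and b2: "is_beta N w X \<beta>2"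
  shows "\<beta>1 = \<beta>2"
proof -
  define e where "e i j = \<beta>1 i j - \<beta>2 i j" for i j
  have de: "e i i = (\<Sum>k<N. pmat N w i k * e k k)" if i: "i < N" for i
  proof -
    have h1: "\<beta>1 i i = real N * (ind X i - meanstate N w X) + (\<Sum>k<N. pmat N w i k * \<beta>1 k k)"
      using b1 i unfolding is_beta_def by blast
    have h2: "\<beta>2 i i = real N * (ind X i - meanstate N w X) + (\<Sum>k<N. pmat N w i k * \<beta>2 k k)"
      using b2 i unfolding is_beta_def by blast
    have "(\<Sum>k<N. pmat N w i k * e k k) = (\<Sum>k<N. pmat N w i k * \<beta>1 k k) - (\<Sum>k<N. pmat N w i k * \<beta>2 k k)"
      unfolding e_def by (simp add: right_diff_distrib sum_subtractf)
    then show ?thesis unfolding e_def using h1 h2 by linarith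
  qed
  obtain M where M: "\<forall>j<N. e j j = M" using diag_const[OF N de] by blast
  have n1: "(\<Sum>i<N. statdist N w i * \<beta>1 i i) = 0" using b1 unfolding is_beta_def by blast
  have n2: "(\<Sum>i<N. statdist N w i * \<beta>2 i i) = 0" using b2 unfolding is_beta_def by blast
  have "(\<Sum>i<N. statdist N w i * e i i) = 0"
    using n1 n2 unfolding e_def by (simp add: right_diff_distrib sum_subtractf)
  then have "(\<Sum>i<N. statdist N w i * M) = 0" using M by simp
  then have "M = 0" using statdist_sum[OF V N] by (simp add: sum_distrib_right[symmetric])
  then have dz: "e k k = 0" if "k < N" for k using M that by simp
  have off: "e i j = 1/2 * (\<Sum>k<N. pmat N w i k * e k j) + 1/2 * (\<Sum>k<N. pmat N w j k * e i k)"
    if ij: "i < N" "j < N" "i \<noteq> j" for i j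
  proof -
    have h1: "\<beta>1 i j = real N / 2 * (ind X i * ind X j - meanstate N w X) + 1/2 * (\<Sum>k<N. pmat N w i k * \<beta>1 k j) + 1/2 * (\<Sum>k<N. pmat N w j k * \<beta>1 i k)"
      using b1 ij unfolding is_beta_def by blast
    have h2: "\<beta>2 i j = real N / 2 * (ind X i * ind X j - meanstate N w X) + 1/2 * (\<Sum>k<N. pmat N w i k * \<beta>2 k j) + 1/2 * (\<Sum>k<N. pmat N w j k * \<beta>2 i k)"
      using b2 ij unfolding is_beta_def by blast
    have "(\<Sum>k<N. pmat N w i k * e k j) = (\<Sum>k<N. pmat N w i k * \<beta>1 k j) - (\<Sum>k<N. pmat N w i k * \<beta>2 k j)"
      "(\<Sum>k<N. pmat N w j k * e i k) = (\<Sum>k<N. pmat N w j k * \<beta>1 i k) - (\<Sum>k<N. pmat N w j k * \<beta>2 i k)"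
      unfolding e_def by (simp_all add: right_diff_distrib sum_subtractf)
    then show ?thesis unfolding e_def using h1 h2 by linarith
  qed
  have dz': "- e k k = 0" if "k < N" for k using dz[OF that] by simp
  have off': "- e i j = 1/2 * (\<Sum>k<N. pmat N w i k * - e k j) + 1/2 * (\<Sum>k<N. pmat N w j k * - e i k)"
    if "i < N" "j < N" "i \<noteq> j" for i j
    using off[OF that] by (simp add: sum_negf)
  have "e i j = 0" if "i < N" "j < N" for i j
    using off_nonpos[OF N dz off that] off_nonpos[OF N dz' off' that] by simp
  moreover have "e i j = 0" if "\<not> (i < N \<and> j < N)" for i j
  proof -
    have "\<beta>1 i j = 0" "\<beta>2 i j = 0" using b1 b2 that unfolding is_beta_def by blast+
    then show ?thesis by (simp add: e_def)
  qed
  ultimately show ?thesis unfolding e_def by (intro ext) (metis eq_iff_diff_eq_0)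
qed

end

lemma betaM_eq: "valid_layer N w \<Longrightarrow> N > 0 \<Longrightarrow> is_beta N w X \<beta> \<Longrightarrow> betaM N w X = \<beta>"
  unfolding betaM_def using beta_unique by blast

lemma psub2:
  assumes V1: "valid_layer N w1" and V2: "valid_layer N w2" and a: "a < N" and j: "j < N"
  shows "(\<Sum>k1<N. \<Sum>k2<N. pmat N w1 a k1 * pmat N w2 j k2 * (M - e k1 k2))
       = M - (\<Sum>k1<N. \<Sum>k2<N. pmat N w1 a k1 * pmat N w2 j k2 * e k1 k2)"
proof -
  have "(\<Sum>k1<N. \<Sum>k2<N. pmat N w1 a k1 * pmat N w2 j k2 * (M - e k1 k2))
      = (\<Sum>k1<N. pmat N w1 a k1 * (\<Sum>k2<N. pmat N w2 j k2 * (M - e k1 k2)))"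
    by (simp add: sum_distrib_left mult.assoc)
  also have "\<dots> = (\<Sum>k1<N. pmat N w1 a k1 * (M - (\<Sum>k2<N. pmat N w2 j k2 * e k1 k2)))"
    by (simp add: psub[OF V2 j])
  also have "\<dots> = M - (\<Sum>k1<N. pmat N w1 a k1 * (\<Sum>k2<N. pmat N w2 j k2 * e k1 k2))"
    by (rule psub[OF V1 a])
  finally show ?thesis by (simp add: sum_distrib_left mult.assoc)
qed

lemma gamma_unique:
  assumes V1: "valid_layer N w1" and V2: "valid_layer N w2" and N2: "2 \<le> N"
    and g1: "is_gamma N w1 w2 X1 X2 \<gamma>1" and g2: "is_gamma N w1 w2 X1 X2 \<gamma>2"
  shows "\<gamma>1 = \<gamma>2"
proof -
  have N: "N > 0" using N2 by simp
  define e where "e i j = \<gamma>1 i j - \<gamma>2 i j" for i j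
  define D where "D = 1 / (2 * real N - 1)"
  define E where "E = (real N - 1) / (2 * real N - 1)"
  define K where "K i j = (real N)^2 / (2 * real N - 1) * (ind X1 i * ind X2 j - meanstate N w1 X1 * meanstate N w2 X2)" for i j
  have Dp: "D > 0" and Ep: "E > 0" using N2 by (auto simp: D_def E_def)
  have DE: "D + 2 * E = 1" using N2 by (simp add: D_def E_def field_simps)
  let ?p1 = "pmat N w1" and ?p2 = "pmat N w2"
  have hom: "e i j = D * (\<Sum>k1<N. \<Sum>k2<N. ?p1 i k1 * ?p2 j k2 * e k1 k2)
      + E * ((\<Sum>k<N. ?p1 i k * e k j) + (\<Sum>k<N. ?p2 j k * e i k))" if ij: "i < N" "j < N" for i j
  proof -
    have h1: "\<gamma>1 i j = K i j + D * (\<Sum>k1<N. \<Sum>k2<N. ?p1 i k1 * ?p2 j k2 * \<gamma>1 k1 k2)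
      + E * ((\<Sum>k<N. ?p1 i k * \<gamma>1 k j) + (\<Sum>k<N. ?p2 j k * \<gamma>1 i k))"
      using g1 ij unfolding is_gamma_def K_def D_def E_def by blast
    have h2: "\<gamma>2 i j = K i j + D * (\<Sum>k1<N. \<Sum>k2<N. ?p1 i k1 * ?p2 j k2 * \<gamma>2 k1 k2)
      + E * ((\<Sum>k<N. ?p1 i k * \<gamma>2 k j) + (\<Sum>k<N. ?p2 j k * \<gamma>2 i k))"
      using g2 ij unfolding is_gamma_def K_def D_def E_def by blast
    show ?thesis unfolding e_def
      by (simp only: right_diff_distrib sum_subtractf h1 h2) (simp add: algebra_simps)
  qed
  define A where "A = {..<N} \<times> {..<N}"
  define M where "M = Max ((\<lambda>(a, b). e a b) ` A)"
  have finA: "finite A" "A \<noteq> {}" using N by (auto simp: A_def)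
  have le: "e a b \<le> M" if "a < N" "b < N" for a b
    unfolding M_def using that finA by (intro Max_ge) (auto simp: A_def)
  have "M \<in> (\<lambda>(a, b). e a b) ` A" unfolding M_def by (rule Max_in) (use finA in auto)
  then obtain i0 j0 where ij0: "i0 < N" "j0 < N" "e i0 j0 = M" by (auto simp: A_def)
  have zero: "D * (\<Sum>k1<N. \<Sum>k2<N. ?p1 a k1 * ?p2 j k2 * (M - e k1 k2))
      + E * (\<Sum>k<N. ?p1 a k * (M - e k j)) + E * (\<Sum>k<N. ?p2 j k * (M - e a k)) = 0"
    if a: "a < N" and j: "j < N" and eaj: "e a j = M" for a j
  proof -
    have "D * (\<Sum>k1<N. \<Sum>k2<N. ?p1 a k1 * ?p2 j k2 * (M - e k1 k2))
      + E * (\<Sum>k<N. ?p1 a k * (M - e k j)) + E * (\<Sum>k<N. ?p2 j k * (M - e a k))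
      = D * (M - (\<Sum>k1<N. \<Sum>k2<N. ?p1 a k1 * ?p2 j k2 * e k1 k2))
      + E * (M - (\<Sum>k<N. ?p1 a k * e k j)) + E * (M - (\<Sum>k<N. ?p2 j k * e a k))"
      by (simp only: psub2[OF V1 V2 a j] psub[OF V1 a] psub[OF V2 j])
    also have "\<dots> = (D + 2 * E) * M - e a j" unfolding hom[OF a j] by (simp add: algebra_simps)
    finally show ?thesis using DE eaj by simp
  qed
  have nn1: "0 \<le> (\<Sum>k1<N. \<Sum>k2<N. ?p1 a k1 * ?p2 j k2 * (M - e k1 k2))" if "a < N" "j < N" for a j
    using that le pmat_nonneg[OF V1] pmat_nonneg[OF V2] by (intro sum_nonneg mult_nonneg_nonneg) auto
  have nn2: "0 \<le> (\<Sum>k<N. ?p1 a k * (M - e k j))" if "a < N" "j < N" for a j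
    using that le pmat_nonneg[OF V1] by (intro sum_nonneg mult_nonneg_nonneg) auto
  have nn3: "0 \<le> (\<Sum>k<N. ?p2 j k * (M - e a k))" if "a < N" "j < N" for a j
    using that le pmat_nonneg[OF V2] by (intro sum_nonneg mult_nonneg_nonneg) auto
  have step1: "e b j = M" if a: "a < N" and b: "b < N" and j: "j < N" and wab: "0 < w1 a b" and eaj: "e a j = M" for a b j
  proof -
    have "E * (\<Sum>k<N. ?p1 a k * (M - e k j)) = 0"
      using zero[OF a j eaj] nn1[OF a j] nn2[OF a j] nn3[OF a j] Dp Ep
      by (smt (verit) mult_nonneg_nonneg)
    then have "(\<Sum>k<N. ?p1 a k * (M - e k j)) = 0" using Ep by simp
    then have "?p1 a b * (M - e b j) = 0"
      by (rule zero_term[rotated 2]) (use b le j pmat_nonneg[OF V1 a] in auto)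
    then show ?thesis using pmat_pos[OF V1 a b wab] by simp
  qed
  have step2: "e i b = M" if a: "a < N" and b: "b < N" and i: "i < N" and wab: "0 < w2 a b" and eia: "e i a = M" for a b i
  proof -
    have "E * (\<Sum>k<N. ?p2 a k * (M - e i k)) = 0"
      using zero[OF i a eia] nn1[OF i a] nn2[OF i a] nn3[OF i a] Dp Ep
      by (smt (verit) mult_nonneg_nonneg)
    then have "(\<Sum>k<N. ?p2 a k * (M - e i k)) = 0" using Ep by simp
    then have "?p2 a b * (M - e i b) = 0"
      by (rule zero_term[rotated 2]) (use b le i pmat_nonneg[OF V2 a] in auto)
    then show ?thesis using pmat_pos[OF V2 a b wab] by simp
  qed
  have col: "e i j0 = M" if i: "i < N" for i
    by (rule path_prop[OF V1, where Q="\<lambda>a. e a j0 = M", OF _ ij0(1,3) i]) (use step1 ij0 in blast)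
  have all: "e i j = M" if i: "i < N" and j: "j < N" for i j
    by (rule path_prop[OF V2, where Q="\<lambda>a. e i a = M", OF _ ij0(2) col[OF i] j]) (use step2 i in blast)
  have n1: "(\<Sum>i<N. statdist N w1 i * \<gamma>1 i i) = 0" using g1 unfolding is_gamma_def by blast
  have n2: "(\<Sum>i<N. statdist N w1 i * \<gamma>2 i i) = 0" using g2 unfolding is_gamma_def by blast
  have "(\<Sum>i<N. statdist N w1 i * e i i) = 0"
    using n1 n2 unfolding e_def by (simp add: right_diff_distrib sum_subtractf)
  then have "(\<Sum>i<N. statdist N w1 i * M) = 0" using all by simp
  then have M0: "M = 0" using statdist_sum[OF V1 N] by (simp add: sum_distrib_right[symmetric])
  have "e i j = 0" for i j
  proof (cases "i < N \<and> j < N")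
    case True then show ?thesis using all M0 by simp
  next
    case False
    have "\<gamma>1 i j = 0" "\<gamma>2 i j = 0" using g1 g2 False unfolding is_gamma_def by blast+
    then show ?thesis by (simp add: e_def)
  qed
  then show ?thesis unfolding e_def by (intro ext) (metis eq_iff_diff_eq_0)
qed

lemma gammaM_eq: "valid_layer N w1 \<Longrightarrow> valid_layer N w2 \<Longrightarrow> 2 \<le> N \<Longrightarrow> is_gamma N w1 w2 X1 X2 \<gamma> \<Longrightarrow> gammaM N w1 w2 X1 X2 = \<gamma>"
  unfolding gammaM_def using gamma_unique by blast

definition Aop :: "nat \<Rightarrow> (nat \<Rightarrow> nat \<Rightarrow> real) \<Rightarrow> (nat \<Rightarrow> real) \<Rightarrow> (nat \<Rightarrow> real) \<Rightarrow> real" where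
  "Aop N w v x = (\<Sum>a<N. statdist N w a * (\<Sum>b<N. pmat N w a b * v b * x b))"
definition Bop :: "nat \<Rightarrow> (nat \<Rightarrow> nat \<Rightarrow> real) \<Rightarrow> (nat \<Rightarrow> real) \<Rightarrow> (nat \<Rightarrow> real) \<Rightarrow> real" where
  "Bop N w v x = (\<Sum>a<N. statdist N w a * ((\<Sum>k<N. pmat N w a k * v k) * (\<Sum>b<N. pmat N w a b * x b)))"
definition QF :: "nat \<Rightarrow> (nat \<Rightarrow> nat \<Rightarrow> real) \<Rightarrow> nat \<Rightarrow> (nat \<Rightarrow> real) \<Rightarrow> (nat \<Rightarrow> real) \<Rightarrow> real" where
  "QF N w n f g = (\<Sum>k<N. \<Sum>l<N. statdist N w k * matpow N (pmat N w) n k l * (f k * g l))"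

lemma Aop_lin: "Aop N w (\<lambda>b. \<alpha> * v b + g b) x = \<alpha> * Aop N w v x + Aop N w g x"
  by (simp add: Aop_def algebra_simps sum.distrib sum_distrib_left)
lemma lin_aux: "(\<Sum>a\<in>A. (p a :: real) * ((\<alpha> * V a + G a) * X a)) = \<alpha> * (\<Sum>a\<in>A. p a * (V a * X a)) + (\<Sum>a\<in>A. p a * (G a * X a))"
  by (simp add: algebra_simps sum.distrib sum_distrib_left)

lemma Bop_lin: "Bop N w (\<lambda>b. \<alpha> * v b + g b) x = \<alpha> * Bop N w v x + Bop N w g x"
proof -
  have e: "(\<Sum>k<N. pmat N w a k * (\<alpha> * v k + g k)) = \<alpha> * (\<Sum>k<N. pmat N w a k * v k) + (\<Sum>k<N. pmat N w a k * g k)" for a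
    by (simp add: algebra_simps sum.distrib sum_distrib_left)
  show ?thesis unfolding Bop_def e by (rule lin_aux)
qed
lemma Aop_cong: "(\<And>b. b < N \<Longrightarrow> v b = v' b) \<Longrightarrow> Aop N w v x = Aop N w v' x"
  by (simp add: Aop_def)
lemma Bop_cong: "(\<And>b. b < N \<Longrightarrow> v b = v' b) \<Longrightarrow> Bop N w v x = Bop N w v' x"
  by (simp add: Bop_def)

context
  fixes N :: nat and w :: "nat \<Rightarrow> nat \<Rightarrow> real"
  assumes V: "valid_layer N w"
begin

lemma mp1: "j < N \<Longrightarrow> matpow N (pmat N w) 1 i j = pmat N w i j"
proof -
  assume j: "j < N"
  have "matpow N (pmat N w) 1 i j = (\<Sum>k<N. pmat N w i k * (if k = j then 1 else 0))"
    unfolding One_nat_def by simp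
  also have "\<dots> = (\<Sum>k<N. if k = j then pmat N w i k else 0)" by (rule sum.cong) auto
  finally show ?thesis using j by simp
qed

lemma mp2: "l < N \<Longrightarrow> matpow N (pmat N w) 2 k l = (\<Sum>a<N. pmat N w k a * pmat N w a l)"
proof -
  assume l: "l < N"
  have "matpow N (pmat N w) 2 k l = (\<Sum>a<N. pmat N w k a * matpow N (pmat N w) 1 a l)"
    using matpow.simps(2)[of N "pmat N w" 1 k l] by (simp only: Suc_1)
  also have "\<dots> = (\<Sum>a<N. pmat N w k a * pmat N w a l)" using mp1[OF l] by simp
  finally show ?thesis .
qed

lemma mp3: "matpow N (pmat N w) 3 k l = (\<Sum>a<N. pmat N w k a * matpow N (pmat N w) 2 a l)"
proof -
  have s: "Suc 2 = (3::nat)" by simp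
  show ?thesis using matpow.simps(2)[of N "pmat N w" 2 k l] by (simp only: s)
qed

lemma QF0: "QF N w 0 f g = (\<Sum>k<N. statdist N w k * (f k * g k))"
proof -
  have "QF N w 0 f g = (\<Sum>k<N. \<Sum>l<N. if l = k then statdist N w k * (f k * g l) else 0)"
    unfolding QF_def by (intro sum.cong refl) auto
  then show ?thesis by simp
qed

lemma A_QF0: "Aop N w v x = QF N w 0 x v"
proof -
  have "Aop N w v x = (\<Sum>b<N. (\<Sum>a<N. statdist N w a * pmat N w a b) * (v b * x b))"
    unfolding Aop_def by (simp add: sum_distrib_left sum_distrib_right mult_ac) (rule sum.swap)
  also have "\<dots> = (\<Sum>b<N. statdist N w b * (x b * v b))" by (intro sum.cong refl) (simp add: stat[OF V] mult_ac)
  finally show ?thesis by (simp add: QF0)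
qed

lemma QF_swap: "QF N w n z x = QF N w n x z"
proof -
  have "QF N w n z x = (\<Sum>l<N. \<Sum>k<N. statdist N w k * matpow N (pmat N w) n k l * (z k * x l))"
    unfolding QF_def by (rule sum.swap)
  also have "\<dots> = (\<Sum>l<N. \<Sum>k<N. statdist N w l * matpow N (pmat N w) n l k * (x l * z k))"
    by (intro sum.cong refl) (simp add: matpow_rev[OF V] mult_ac)
  finally show ?thesis by (simp add: QF_def)
qed

lemma A_QF1: "Aop N w (\<lambda>b. \<Sum>j<N. pmat N w b j * x j) x = QF N w 1 x x"
proof -
  have "Aop N w (\<lambda>b. \<Sum>j<N. pmat N w b j * x j) x = (\<Sum>k<N. statdist N w k * (x k * (\<Sum>j<N. pmat N w k j * x j)))"
    by (simp add: A_QF0 QF0)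
  also have "\<dots> = (\<Sum>k<N. \<Sum>l<N. statdist N w k * pmat N w k l * (x k * x l))"
    by (intro sum.cong refl) (simp add: sum_distrib_left mult_ac)
  also have "\<dots> = QF N w 1 x x"
    unfolding QF_def by (intro sum.cong refl) (simp only: mp1 lessThan_iff)
  finally show ?thesis .
qed

lemma B_QF2: "Bop N w v x = QF N w 2 v x"
proof -
  have "Bop N w v x = (\<Sum>a<N. \<Sum>k<N. \<Sum>l<N. (statdist N w a * pmat N w a k) * pmat N w a l * (v k * x l))"
    unfolding Bop_def sum_product unfolding sum_distrib_left by (intro sum.cong refl) (simp add: mult_ac)
  also have "\<dots> = (\<Sum>k<N. \<Sum>a<N. \<Sum>l<N. (statdist N w a * pmat N w a k) * pmat N w a l * (v k * x l))"
    by (rule sum.swap)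
  also have "\<dots> = (\<Sum>k<N. \<Sum>l<N. \<Sum>a<N. (statdist N w a * pmat N w a k) * pmat N w a l * (v k * x l))"
    by (rule sum.cong[OF refl], rule sum.swap)
  also have "\<dots> = (\<Sum>k<N. \<Sum>l<N. \<Sum>a<N. statdist N w k * (pmat N w k a * pmat N w a l) * (v k * x l))"
    by (intro sum.cong refl) (simp add: rev[OF V] mult_ac)
  also have "\<dots> = (\<Sum>k<N. \<Sum>l<N. statdist N w k * (\<Sum>a<N. pmat N w k a * pmat N w a l) * (v k * x l))"
    by (simp add: sum_distrib_left sum_distrib_right)
  also have "\<dots> = QF N w 2 v x"
    unfolding QF_def by (intro sum.cong refl) (simp only: mp2 lessThan_iff)
  finally show ?thesis .
qed

lemma B_QF3: "Bop N w (\<lambda>k. \<Sum>j<N. pmat N w k j * x j) x = QF N w 3 x x"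
proof -
  have "Bop N w (\<lambda>k. \<Sum>j<N. pmat N w k j * x j) x
      = (\<Sum>k<N. \<Sum>l<N. \<Sum>j<N. (statdist N w k * pmat N w k j) * matpow N (pmat N w) 2 k l * (x j * x l))"
    unfolding B_QF2 QF_def sum_distrib_left sum_distrib_right by (intro sum.cong refl) (simp add: mult_ac)
  also have "\<dots> = (\<Sum>k<N. \<Sum>j<N. \<Sum>l<N. (statdist N w k * pmat N w k j) * matpow N (pmat N w) 2 k l * (x j * x l))"
    by (rule sum.cong[OF refl], rule sum.swap)
  also have "\<dots> = (\<Sum>j<N. \<Sum>k<N. \<Sum>l<N. (statdist N w k * pmat N w k j) * matpow N (pmat N w) 2 k l * (x j * x l))"
    by (rule sum.swap)
  also have "\<dots> = (\<Sum>j<N. \<Sum>l<N. \<Sum>k<N. (statdist N w k * pmat N w k j) * matpow N (pmat N w) 2 k l * (x j * x l))"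
    by (rule sum.cong[OF refl], rule sum.swap)
  also have "\<dots> = (\<Sum>j<N. \<Sum>l<N. \<Sum>k<N. statdist N w j * (pmat N w j k * matpow N (pmat N w) 2 k l) * (x j * x l))"
    by (intro sum.cong refl) (simp add: rev[OF V] mult_ac)
  also have "\<dots> = (\<Sum>j<N. \<Sum>l<N. statdist N w j * (\<Sum>k<N. pmat N w j k * matpow N (pmat N w) 2 k l) * (x j * x l))"
    by (simp add: sum_distrib_left sum_distrib_right)
  also have "\<dots> = QF N w 3 x x"
    unfolding QF_def mp3 ..
  finally show ?thesis .
qed

lemma AB1: "Aop N w (\<lambda>_. 1) x = Bop N w (\<lambda>_. 1) x"
proof -
  have "Bop N w (\<lambda>_. 1) x = (\<Sum>a<N. statdist N w a * (\<Sum>b<N. pmat N w a b * x b))"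
    unfolding Bop_def by (intro sum.cong refl) (simp add: pmat_rowsum[OF V])
  then show ?thesis by (simp add: Aop_def)
qed

lemma QF_const: "N > 0 \<Longrightarrow> (\<Sum>k<N. \<Sum>l<N. statdist N w k * matpow N (pmat N w) n k l) = 1"
proof -
  assume N: "N > 0"
  have "(\<Sum>k<N. \<Sum>l<N. statdist N w k * matpow N (pmat N w) n k l) = (\<Sum>k<N. statdist N w k)"
    by (intro sum.cong refl) (simp add: sum_distrib_left[symmetric] matpow_rowsum[OF V])
  then show ?thesis using statdist_sum[OF V N] by simp
qed

end

context mx begin

abbreviation "xs y \<equiv> (\<lambda>k. ind (fst y) k)"
abbreviation "zs y \<equiv> (\<lambda>k. ind (snd y) k)"

lemma Rf0_AB: "Rf 0 y = (1 / real N) * (Aop N w1 (u y) (xs y) - Bop N w1 (u y) (xs y))"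
proof -
  have inner: "(\<Sum>b'<N. w1 a b' * (u y b' * s1 a - Uu y a) / (s1 a * Dd 0 y a) * ind (fst y) b')
      = (\<Sum>b'<N. p1 a b' * u y b' * ind (fst y) b') - (\<Sum>k<N. p1 a k * u y k) * (\<Sum>b'<N. p1 a b' * ind (fst y) b')"
    if a: "a < N" for a
  proof -
    have s: "s1 a > 0" using vl_spos[OF V1 a] .
    have U: "Uu y a / s1 a = (\<Sum>k<N. p1 a k * u y k)"
      by (simp add: Uu_def pmat_def sum_divide_distrib)
    have "(\<Sum>b'<N. w1 a b' * (u y b' * s1 a - Uu y a) / (s1 a * Dd 0 y a) * ind (fst y) b')
        = (\<Sum>b'<N. p1 a b' * u y b' * ind (fst y) b' - (Uu y a / s1 a) * (p1 a b' * ind (fst y) b'))"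
      using s by (intro sum.cong refl) (simp add: Dd_eq pmat_def field_simps)
    also have "\<dots> = (\<Sum>b'<N. p1 a b' * u y b' * ind (fst y) b') - (Uu y a / s1 a) * (\<Sum>b'<N. p1 a b' * ind (fst y) b')"
      by (simp add: sum_subtractf sum_distrib_left)
    finally show ?thesis unfolding U .
  qed
  have "Rf 0 y = (1 / real N) * (\<Sum>a<N. \<pi>1 a * ((\<Sum>b'<N. p1 a b' * u y b' * ind (fst y) b')
      - (\<Sum>k<N. p1 a k * u y k) * (\<Sum>b'<N. p1 a b' * ind (fst y) b')))"
    unfolding Rf_def
  proof (intro arg_cong[where f="\<lambda>z. (1 / real N) * z"] sum.cong refl)
    fix a assume "a \<in> {..<N}"
    then have a: "a < N" by simp
    show "\<pi>1 a * (\<Sum>b'<N. w1 a b' * (u y b' * s1 a - Uu y a) / (s1 a * Dd 0 y a) * ind (fst y) b')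
      = \<pi>1 a * ((\<Sum>b'<N. p1 a b' * u y b' * ind (fst y) b') - (\<Sum>k<N. p1 a k * u y k) * (\<Sum>b'<N. p1 a b' * ind (fst y) b'))"
      by (simp only: inner[OF a])
  qed
  also have "\<dots> = (1 / real N) * (Aop N w1 (u y) (xs y) - Bop N w1 (u y) (xs y))"
    unfolding Aop_def Bop_def by (simp add: right_diff_distrib sum_subtractf)
  finally show ?thesis .
qed

lemma u_decomp: "b' < N \<Longrightarrow> u y b' = (- c) * xs y b' + (b * (\<Sum>j<N. p1 b' j * xs y j) + ((r - 1) * zs y b' + 1))"
  by (simp add: payoff_def sum_distrib_left mult.assoc)

lemma Rf0_QF: "Rf 0 y = (1 / real N) * (c * (QF N w1 2 (xs y) (xs y) - QF N w1 0 (xs y) (xs y))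
   + b * (QF N w1 1 (xs y) (xs y) - QF N w1 3 (xs y) (xs y)) + (r - 1) * (QF N w1 0 (xs y) (zs y) - QF N w1 2 (xs y) (zs y)))"
proof -
  let ?v = "\<lambda>b'. (- c) * xs y b' + (b * (\<Sum>j<N. p1 b' j * xs y j) + ((r - 1) * zs y b' + 1))"
  have A: "Aop N w1 (u y) (xs y) = (- c) * Aop N w1 (xs y) (xs y) + (b * Aop N w1 (\<lambda>b'. \<Sum>j<N. p1 b' j * xs y j) (xs y)
      + ((r - 1) * Aop N w1 (zs y) (xs y) + Aop N w1 (\<lambda>_. 1) (xs y)))"
  proof -
    have "Aop N w1 (u y) (xs y) = Aop N w1 ?v (xs y)" by (rule Aop_cong) (rule u_decomp)
    then show ?thesis by (simp only: Aop_lin)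
  qed
  have B: "Bop N w1 (u y) (xs y) = (- c) * Bop N w1 (xs y) (xs y) + (b * Bop N w1 (\<lambda>b'. \<Sum>j<N. p1 b' j * xs y j) (xs y)
      + ((r - 1) * Bop N w1 (zs y) (xs y) + Bop N w1 (\<lambda>_. 1) (xs y)))"
  proof -
    have "Bop N w1 (u y) (xs y) = Bop N w1 ?v (xs y)" by (rule Bop_cong) (rule u_decomp)
    then show ?thesis by (simp only: Bop_lin)
  qed
  have AB1': "Aop N w1 (\<lambda>_. 1) (xs y) - Bop N w1 (\<lambda>_. 1) (xs y) = 0" using AB1[OF V1] by simp
  have "Rf 0 y = (1 / real N) * ((- c) * (Aop N w1 (xs y) (xs y) - Bop N w1 (xs y) (xs y))
      + b * (Aop N w1 (\<lambda>b'. \<Sum>j<N. p1 b' j * xs y j) (xs y) - Bop N w1 (\<lambda>b'. \<Sum>j<N. p1 b' j * xs y j) (xs y))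
      + (r - 1) * (Aop N w1 (zs y) (xs y) - Bop N w1 (zs y) (xs y))
      + (Aop N w1 (\<lambda>_. 1) (xs y) - Bop N w1 (\<lambda>_. 1) (xs y)))"
    unfolding Rf0_AB A B by (simp add: algebra_simps)
  also have "\<dots> = (1 / real N) * ((- c) * (QF N w1 0 (xs y) (xs y) - QF N w1 2 (xs y) (xs y))
      + b * (QF N w1 1 (xs y) (xs y) - QF N w1 3 (xs y) (xs y))
      + (r - 1) * (QF N w1 0 (xs y) (zs y) - QF N w1 2 (xs y) (zs y)))"
    unfolding AB1' unfolding A_QF1[OF V1] B_QF3[OF V1] A_QF0[OF V1] B_QF2[OF V1] QF_swap[OF V1, of 2 "zs y" "xs y"] by simp
  finally show ?thesis by (simp add: algebra_simps)
qed

end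

context mx begin

abbreviation "cP n k l \<equiv> \<pi>1 k * matpow N p1 n k l"
definition "SA n t = (\<Sum>k<N. \<Sum>l<N. cP n k l * aa t k l)"
definition "SC n t = (\<Sum>k<N. \<Sum>l<N. cP n k l * cc t k l)"
definition "TH n = (\<Sum>k<N. \<Sum>l<N. cP n k l * bet k l)"
definition "PH n = (\<Sum>k<N. \<Sum>l<N. cP n k l * Gs k l)"

lemma cP_sum: "(\<Sum>k<N. \<Sum>l<N. cP n k l) = 1" by (rule QF_const[OF V1 Npos])

lemma csum_shift: "(\<Sum>k<N. \<Sum>l<N. cP n k l * (A k l + m)) = (\<Sum>k<N. \<Sum>l<N. cP n k l * A k l) + m"
proof -
  have "(\<Sum>k<N. \<Sum>l<N. cP n k l * (A k l + m)) = (\<Sum>k<N. \<Sum>l<N. cP n k l * A k l) + (\<Sum>k<N. \<Sum>l<N. cP n k l) * m"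
    by (simp add: distrib_left sum.distrib sum_distrib_right)
  then show ?thesis using cP_sum by simp
qed

lemma EE_QFx: "EE (T 0) S t (\<lambda>y. QF N w1 n (xs y) (xs y)) xi = SA n t + m1"
proof -
  have f: "(\<lambda>y. QF N w1 n (xs y) (xs y)) = (\<lambda>y. \<Sum>k<N. \<Sum>l<N. cP n k l * qf k l y)"
    by (rule ext) (simp add: QF_def qf_def)
  have "EE (T 0) S t (\<lambda>y. \<Sum>k<N. \<Sum>l<N. cP n k l * qf k l y) xi = (\<Sum>k<N. \<Sum>l<N. cP n k l * EE (T 0) S t (qf k l) xi)"
    by (simp only: EE_sum EE_cmult)
  also have "\<dots> = (\<Sum>k<N. \<Sum>l<N. cP n k l * (aa t k l + m1))" by (simp add: aa_def)
  finally show ?thesis unfolding f csum_shift SA_def .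
qed

lemma EE_QFz: "EE (T 0) S t (\<lambda>y. QF N w1 n (xs y) (zs y)) xi = SC n t + m1 * m2"
proof -
  have f: "(\<lambda>y. QF N w1 n (xs y) (zs y)) = (\<lambda>y. \<Sum>k<N. \<Sum>l<N. cP n k l * qc k l y)"
    by (rule ext) (simp add: QF_def qc_def)
  have "EE (T 0) S t (\<lambda>y. \<Sum>k<N. \<Sum>l<N. cP n k l * qc k l y) xi = (\<Sum>k<N. \<Sum>l<N. cP n k l * EE (T 0) S t (qc k l) xi)"
    by (simp only: EE_sum EE_cmult)
  also have "\<dots> = (\<Sum>k<N. \<Sum>l<N. cP n k l * (cc t k l + m1 * m2))" by (simp add: cc_def)
  finally show ?thesis unfolding f csum_shift SC_def .
qed

lemma EE_Rf0: "EE (T 0) S t (Rf 0) xi = (1 / real N) * (c * (SA 2 t - SA 0 t) + b * (SA 1 t - SA 3 t) + (r - 1) * (SC 0 t - SC 2 t))"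
proof -
  have "EE (T 0) S t (Rf 0) xi = EE (T 0) S t (\<lambda>y. (1 / real N) * (c * (QF N w1 2 (xs y) (xs y) - QF N w1 0 (xs y) (xs y))
   + b * (QF N w1 1 (xs y) (xs y) - QF N w1 3 (xs y) (xs y)) + (r - 1) * (QF N w1 0 (xs y) (zs y) - QF N w1 2 (xs y) (zs y)))) xi"
    by (rule EE_cong) (rule Rf0_QF)
  also have "\<dots> = (1 / real N) * (c * (EE (T 0) S t (\<lambda>y. QF N w1 2 (xs y) (xs y)) xi - EE (T 0) S t (\<lambda>y. QF N w1 0 (xs y) (xs y)) xi)
   + b * (EE (T 0) S t (\<lambda>y. QF N w1 1 (xs y) (xs y)) xi - EE (T 0) S t (\<lambda>y. QF N w1 3 (xs y) (xs y)) xi)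
   + (r - 1) * (EE (T 0) S t (\<lambda>y. QF N w1 0 (xs y) (zs y)) xi - EE (T 0) S t (\<lambda>y. QF N w1 2 (xs y) (zs y)) xi))"
    by (simp only: EE_cmult EE_add_fun EE_diff)
  finally show ?thesis unfolding EE_QFx EE_QFz by simp
qed

lemma SA_sums: "(\<lambda>t. SA n t) sums TH n"
  unfolding SA_def TH_def by (intro sums_sum sums_mult aa_sums) auto

lemma SC_sums: "(\<lambda>t. SC n t) sums PH n"
  unfolding SC_def PH_def by (intro sums_sum sums_mult cc_sums) auto

lemma Hs0: "Hs 0 xi = (1 / real N) * (c * (TH 2 - TH 0) + b * (TH 1 - TH 3) + (r - 1) * (PH 0 - PH 2))"
proof -
  have s1: "(\<lambda>t. EE (T 0) S t (Rf 0) xi) sums Hs 0 xi"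
    unfolding Hs_def by (rule summable_sums[OF summable_terms[OF d00 xiS]])
  have s2: "(\<lambda>t. EE (T 0) S t (Rf 0) xi) sums ((1 / real N) * (c * (TH 2 - TH 0) + b * (TH 1 - TH 3) + (r - 1) * (PH 0 - PH 2)))"
    unfolding EE_Rf0 by (intro sums_mult sums_add sums_diff SA_sums SC_sums)
  show ?thesis using sums_unique2[OF s1 s2] .
qed

lemma mp0_sum: "k < N \<Longrightarrow> (\<Sum>l<N. matpow N P 0 k l * f l) = f k"
proof -
  assume k: "k < N"
  have "(\<Sum>l<N. matpow N P 0 k l * f l) = (\<Sum>l<N. if l = k then f l else 0)" by (rule sum.cong) auto
  then show ?thesis using k by simp
qed

lemma TH0: "TH 0 = 0"
proof -
  have "TH 0 = (\<Sum>k<N. \<pi>1 k * (\<Sum>l<N. matpow N p1 0 k l * bet k l))"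
    unfolding TH_def by (simp add: sum_distrib_left mult.assoc)
  also have "\<dots> = (\<Sum>k<N. \<pi>1 k * bet k k)" by (intro sum.cong refl) (simp only: mp0_sum lessThan_iff)
  finally show ?thesis using bet_norm by simp
qed

lemma TH_theta: "TH n = theta N w1 X1 n"
  unfolding TH_def theta_def betaM_eq[OF V1 Npos is_beta_bet] by simp

lemma gM: "gammaM N w1 w2 X1 X2 = gam" by (rule gammaM_eq[OF V1 V2 N2 is_gamma_gam])

lemma PH_gam: "PH n = (\<Sum>k<N. \<Sum>l<N. cP n k l * gam k l) + C0"
proof -
  have "PH n = (\<Sum>k<N. \<Sum>l<N. cP n k l * (gam k l + C0))"
    unfolding PH_def by (intro sum.cong refl) (simp add: gam_def)
  then show ?thesis by (simp only: csum_shift)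
qed

lemma PH_diff: "PH 0 - PH 2 = - phi N w1 w2 X1 X2 2 0"
proof -
  have n: "(\<Sum>k<N. \<Sum>l<N. cP 0 k l * gam k l) = 0"
  proof -
    have "(\<Sum>k<N. \<Sum>l<N. cP 0 k l * gam k l) = (\<Sum>k<N. \<pi>1 k * (\<Sum>l<N. matpow N p1 0 k l * gam k l))"
      by (simp add: sum_distrib_left mult.assoc)
    also have "\<dots> = (\<Sum>k<N. \<pi>1 k * gam k k)" by (intro sum.cong refl) (simp only: mp0_sum lessThan_iff)
    also have "\<dots> = 0" using is_gamma_gam unfolding is_gamma_def by blast
    finally show ?thesis .
  qed
  have p: "phi N w1 w2 X1 X2 2 0 = (\<Sum>k<N. \<Sum>l<N. cP 2 k l * gam k l)"
  proof -
    have "(\<Sum>j<N. matpow N p1 2 i j * matpow N p2 0 j l) = matpow N p1 2 i l" if "l < N" for i l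
    proof -
      have "(\<Sum>j<N. matpow N p1 2 i j * matpow N p2 0 j l) = (\<Sum>j<N. if j = l then matpow N p1 2 i j else 0)"
        by (rule sum.cong) auto
      then show ?thesis using that by simp
    qed
    then show ?thesis unfolding phi_def gM by (intro sum.cong refl) auto
  qed
  show ?thesis unfolding PH_gam n p by simp
qed

lemma Hs0_final: "Hs 0 xi = (1 / real N) * (c * theta N w1 X1 2 + b * (theta N w1 X1 1 - theta N w1 X1 3)
    - (r - 1) * phi N w1 w2 X1 X2 2 0)"
  unfolding Hs0 PH_diff TH0 TH_theta[symmetric] by (simp add: algebra_simps)

end

theorem mainTheorem1:
  fixes N :: nat and w1 w2 :: "nat \<Rightarrow> nat \<Rightarrow> real" and b c r :: real
    and \<xi> :: "nat set \<times> nat set"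
  assumes "N \<ge> 2"
    and "valid_layer N w1" and "valid_layer N w2"
    and "r \<ge> 0"
    and "\<xi> \<in> states N"
    and "\<not> (fst \<xi> \<in> {{}, {..<N}} \<and> snd \<xi> \<in> {{}, {..<N}})"
  shows "\<exists>D. ((\<lambda>\<delta>. rho1 N w1 w2 b c r \<delta> \<xi>) has_real_derivative D) (at 0 within {0..})
           \<and> (D > 0 \<longleftrightarrow>
              c * theta N w1 (fst \<xi>) 2
              + b * (theta N w1 (fst \<xi>) 1 - theta N w1 (fst \<xi>) 3)
              - (r - 1) * phi N w1 w2 (fst \<xi>) (snd \<xi>) 2 0 > 0)"
proof -
  interpret mx N w1 w2 b c r \<xi>
    by unfold_locales (use assms in auto)
  have d: "((\<lambda>\<delta>. rho1 N w1 w2 b c r \<delta> \<xi>) has_real_derivative Hs 0 \<xi>) (at 0 within {0..})"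
    by (rule rho_deriv[OF assms(5)])
  have h: "Hs 0 \<xi> = (1 / real N) * (c * theta N w1 (fst \<xi>) 2
              + b * (theta N w1 (fst \<xi>) 1 - theta N w1 (fst \<xi>) 3)
              - (r - 1) * phi N w1 w2 (fst \<xi>) (snd \<xi>) 2 0)"
    by (rule Hs0_final)
  have Np: "0 < 1 / real N" using assms(1) by simp
  have "Hs 0 \<xi> > 0 \<longleftrightarrow> c * theta N w1 (fst \<xi>) 2
              + b * (theta N w1 (fst \<xi>) 1 - theta N w1 (fst \<xi>) 3)
              - (r - 1) * phi N w1 w2 (fst \<xi>) (snd \<xi>) 2 0 > 0"
  proof -
    have gen: "0 < (1 / real N) * F \<longleftrightarrow> 0 < F" for F :: real
      using Np by (simp add: zero_less_divide_iff)
    show ?thesis unfolding h by (rule gen)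
  qed
  then show ?thesis using d by blast
qed

end
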